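(* Let $d\ge2$, let $\Omega\subseteq\mathbb{R}^d$ be a bounded open set, let $K_\varepsilon\subseteq\Omega$ be compact, and let $\lambda_N$ be a Dirichlet eigenvalue of $\Omega$ with eigenspace $E(\lambda_N)$. Define, for $u,v\in H^1_0(\Omega\setminus K_\varepsilon)$, \[ q_\varepsilon(u,v)\equiv\int_{\Omega\setminus K_\varepsilon}\nabla u\cdot\nabla v\,dx-\lambda_N\int_{\Omega\setminus K_\varepsilon}uv\,dx, \] and, for $u,v\in E(\lambda_N)$, \[ r_\varepsilon(u,v)\equiv\int_\Omega\nabla V_{K_\varepsilon,u}\cdot\nabla V_{K_\varepsilon,v}\,dx-\lambda_N\int_\Omega V_{K_\varepsilon,u}V_{K_\varepsilon,v}\,dx . \] Let $\Pi_\varepsilon u\equiv u-V_{K_\varepsilon,u}$. Then $q_\varepsilon(\Pi_\varepsilon u,\Pi_\varepsilon v)=r_\varepsilon(u,v)$ for all $u,v\in E(\lambda_N)$.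
   Context: $H^1_0(\Omega\setminus K)$ is viewed inside $H^1_0(\Omega)$ by extension by zero. For a compact $K\subseteq\Omega$ and $u\in H^1_0(\Omega)$, $V_{K,u}$ is the unique minimizer of $\int_\Omega|\nabla f|^2dx$ over $\{f\in H^1_0(\Omega):f-u\in H^1_0(\Omega\setminus K)\}$; thus $\Pi_\varepsilon u\in H^1_0(\Omega\setminus K_\varepsilon)$. *)

theory Defs
  imports "HOL-Analysis.Analysis"
begin

fun Ck :: "nat \<Rightarrow> ('a::euclidean_space \<Rightarrow> real) \<Rightarrow> bool" where
  "Ck 0 f = continuous_on UNIV f"
| "Ck (Suc k) f = ((\<forall>x. f differentiable (at x)) \<and>
       (\<forall>i\<in>Basis. Ck k (\<lambda>x. frechet_derivative f (at x) i)))"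

definition smooth_fun :: "('a::euclidean_space \<Rightarrow> real) \<Rightarrow> bool" where
  "smooth_fun f \<longleftrightarrow> (\<forall>k. Ck k f)"

definition test_fun :: "'a::euclidean_space set \<Rightarrow> ('a \<Rightarrow> real) \<Rightarrow> bool" where
  "test_fun U f \<longleftrightarrow> smooth_fun f \<and> compact (closure {x. f x \<noteq> 0})
      \<and> closure {x. f x \<noteq> 0} \<subseteq> U"

definition cgrad :: "('a::euclidean_space \<Rightarrow> real) \<Rightarrow> 'a \<Rightarrow> 'a" where
  "cgrad f x = (\<Sum>i\<in>Basis. frechet_derivative f (at x) i *\<^sub>R i)"

section \<open>H^1_0(U), functions extended by zero to the whole space\<close>

definition H10_grad :: "'a::euclidean_space set \<Rightarrow> ('a \<Rightarrow> real) \<Rightarrow> ('a \<Rightarrow> 'a) \<Rightarrow> bool" where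
  "H10_grad U u g \<longleftrightarrow> u \<in> borel_measurable lborel \<and> g \<in> borel_measurable lborel \<and>
     (\<exists>\<phi>::nat \<Rightarrow> 'a \<Rightarrow> real. (\<forall>n. test_fun U (\<phi> n)) \<and>
        ((\<lambda>n. \<integral>\<^sup>+ x. ennreal ((\<phi> n x - u x)\<^sup>2) \<partial>lborel) \<longlonglongrightarrow> 0) \<and>
        ((\<lambda>n. \<integral>\<^sup>+ x. ennreal ((norm (cgrad (\<phi> n) x - g x))\<^sup>2) \<partial>lborel) \<longlonglongrightarrow> 0))"

definition H10 :: "'a::euclidean_space set \<Rightarrow> ('a \<Rightarrow> real) set" where
  "H10 U = {u. \<exists>g. H10_grad U u g}"

text \<open>Weak gradient (unique a.e.; independent of U since H^1_0(U) \<subseteq> H^1_0(R^d)).\<close>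
definition wgrad :: "('a::euclidean_space \<Rightarrow> real) \<Rightarrow> 'a \<Rightarrow> 'a" where
  "wgrad u = (SOME g. H10_grad UNIV u g)"

definition eigenspace_D :: "'a::euclidean_space set \<Rightarrow> real \<Rightarrow> ('a \<Rightarrow> real) set" where
  "eigenspace_D \<Omega> lam = {u \<in> H10 \<Omega>. \<forall>\<phi>\<in>H10 \<Omega>.
      (LINT x:\<Omega>|lborel. wgrad u x \<bullet> wgrad \<phi> x) = lam * (LINT x:\<Omega>|lborel. u x * \<phi> x)}"

definition dirichlet_eigenvalue :: "'a::euclidean_space set \<Rightarrow> real \<Rightarrow> bool" where
  "dirichlet_eigenvalue \<Omega> lam \<longleftrightarrow>
     (\<exists>u\<in>eigenspace_D \<Omega> lam. \<not> (AE x in lborel. u x = 0))"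

definition Vfun :: "'a::euclidean_space set \<Rightarrow> 'a set \<Rightarrow> ('a \<Rightarrow> real) \<Rightarrow> 'a \<Rightarrow> real" where
  "Vfun \<Omega> K u = (SOME f. f \<in> H10 \<Omega> \<and> (\<lambda>x. f x - u x) \<in> H10 (\<Omega> - K) \<and>
      (\<forall>h. h \<in> H10 \<Omega> \<and> (\<lambda>x. h x - u x) \<in> H10 (\<Omega> - K) \<longrightarrow>
         (LINT x:\<Omega>|lborel. (norm (wgrad f x))\<^sup>2) \<le> (LINT x:\<Omega>|lborel. (norm (wgrad h x))\<^sup>2)))"

definition Proj :: "'a::euclidean_space set \<Rightarrow> 'a set \<Rightarrow> ('a \<Rightarrow> real) \<Rightarrow> 'a \<Rightarrow> real" where
  "Proj \<Omega> K u = (\<lambda>x. u x - Vfun \<Omega> K u x)"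

definition qform :: "'a::euclidean_space set \<Rightarrow> 'a set \<Rightarrow> real \<Rightarrow> ('a \<Rightarrow> real) \<Rightarrow> ('a \<Rightarrow> real) \<Rightarrow> real" where
  "qform \<Omega> K lam u v = (LINT x:(\<Omega> - K)|lborel. wgrad u x \<bullet> wgrad v x)
      - lam * (LINT x:(\<Omega> - K)|lborel. u x * v x)"

definition rform :: "'a::euclidean_space set \<Rightarrow> 'a set \<Rightarrow> real \<Rightarrow> ('a \<Rightarrow> real) \<Rightarrow> ('a \<Rightarrow> real) \<Rightarrow> real" where
  "rform \<Omega> K lam u v = (LINT x:\<Omega>|lborel. wgrad (Vfun \<Omega> K u) x \<bullet> wgrad (Vfun \<Omega> K v) x)
      - lam * (LINT x:\<Omega>|lborel. Vfun \<Omega> K u x * Vfun \<Omega> K v x)"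

end

theory Submission
  imports Defs "HOL-Analysis.Analysis"
begin

lemma fd_lin:
  fixes f g :: "'a::euclidean_space \<Rightarrow> real"
  assumes "f differentiable at x" "g differentiable at x"
  shows "frechet_derivative (\<lambda>x. a * f x + b * g x) (at x) i
        = a * frechet_derivative f (at x) i + b * frechet_derivative g (at x) i"
proof -
  have "((\<lambda>x. a * f x + b * g x) has_derivative
     (\<lambda>h. a * frechet_derivative f (at x) h + b * frechet_derivative g (at x) h)) (at x)"
    using assms by (intro derivative_intros) (auto simp: frechet_derivative_works[symmetric])
  from frechet_derivative_at[OF this] show ?thesis by metis
qed

lemma Ck_lin:
  fixes f g :: "'a::euclidean_space \<Rightarrow> real"
  shows "Ck k f \<Longrightarrow> Ck k g \<Longrightarrow> Ck k (\<lambda>x. a * f x + b * g x)"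
proof (induction k arbitrary: f g)
  case 0
  then show ?case by (auto intro!: continuous_intros)
next
  case (Suc k)
  have d: "\<forall>x. f differentiable at x" "\<forall>x. g differentiable at x" using Suc.prems by auto
  show ?case
  proof (simp only: Ck.simps, intro conjI ballI allI)
    fix x show "(\<lambda>x. a * f x + b * g x) differentiable at x"
      using d unfolding differentiable_def
      by (metis (no_types) frechet_derivative_works has_derivative_add has_derivative_mult_right)
  next
    fix i :: 'a assume i: "i \<in> Basis"
    have "(\<lambda>x. frechet_derivative (\<lambda>x. a * f x + b * g x) (at x) i) =
       (\<lambda>x. a * frechet_derivative f (at x) i + b * frechet_derivative g (at x) i)"
      using d by (simp add: fd_lin)
    moreover have "Ck k (\<lambda>x. frechet_derivative f (at x) i)" "Ck k (\<lambda>x. frechet_derivative g (at x) i)"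
      using Suc.prems i by auto
    ultimately show "Ck k (\<lambda>x. frechet_derivative (\<lambda>x. a * f x + b * g x) (at x) i)"
      using Suc.IH by simp
  qed
qed

abbreviation pd :: "('a::euclidean_space \<Rightarrow> real) \<Rightarrow> 'a \<Rightarrow> 'a \<Rightarrow> real" where
  "pd f i \<equiv> (\<lambda>x. frechet_derivative f (at x) i)"

abbreviation supp :: "('a::euclidean_space \<Rightarrow> real) \<Rightarrow> 'a set" where
  "supp f \<equiv> closure {x. f x \<noteq> 0}"

lemma fd_zero_open:
  fixes f :: "'a::euclidean_space \<Rightarrow> real"
  assumes "open S" "\<forall>y\<in>S. f y = 0" "x \<in> S"
  shows "frechet_derivative f (at x) = (\<lambda>h. 0)"
proof -
  have "((\<lambda>y. 0::real) has_derivative (\<lambda>h. 0)) (at x)" by (rule has_derivative_const)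
  then have "(f has_derivative (\<lambda>h. 0)) (at x)"
    by (rule has_derivative_transform_within_open[OF _ assms(1) assms(3)]) (use assms(2) in auto)
  from frechet_derivative_at[OF this] show ?thesis by simp
qed

lemma outside_supp:
  fixes f :: "'a::euclidean_space \<Rightarrow> real"
  assumes "x \<notin> supp f"
  shows "f x = 0" "pd f i x = 0" "pd (pd f i) j x = 0"
proof -
  have o: "open (- supp f)" by blast
  have z: "\<forall>y\<in>- supp f. f y = 0"
  proof
    fix y assume "y \<in> - supp f"
    then have "y \<notin> {x. f x \<noteq> 0}" using closure_subset by (metis ComplD subsetD)
    then show "f y = 0" by blast
  qed
  show "f x = 0" using assms z by blast
  have z2: "\<forall>y\<in>- supp f. pd f i y = 0"
  proof
    fix y assume "y \<in> - supp f"
    from fd_zero_open[OF o z this] show "pd f i y = 0" by (rule fun_cong)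
  qed
  show "pd f i x = 0" using z2 assms by blast
  have "frechet_derivative (pd f i) (at x) = (\<lambda>h. 0)"
    by (rule fd_zero_open[OF o z2]) (use assms in blast)
  then show "pd (pd f i) j x = 0" by (rule fun_cong)
qed
lemma test_fun_lin:
  fixes f g :: "'a::euclidean_space \<Rightarrow> real"
  assumes "test_fun U f" "test_fun U g"
  shows "test_fun U (\<lambda>x. a * f x + b * g x)"
proof -
  have s: "smooth_fun (\<lambda>x. a * f x + b * g x)"
    using assms Ck_lin unfolding test_fun_def smooth_fun_def by blast
  have sub: "supp (\<lambda>x. a * f x + b * g x) \<subseteq> supp f \<union> supp g"
  proof -
    have "{x. a * f x + b * g x \<noteq> 0} \<subseteq> {x. f x \<noteq> 0} \<union> {x. g x \<noteq> 0}" by auto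
    then have "supp (\<lambda>x. a * f x + b * g x) \<subseteq> closure ({x. f x \<noteq> 0} \<union> {x. g x \<noteq> 0})"
      by (rule closure_mono)
    then show ?thesis by (simp add: closure_Un)
  qed
  have c: "compact (supp f \<union> supp g)" using assms unfolding test_fun_def by auto
  have "compact (supp (\<lambda>x. a * f x + b * g x))"
    using sub c by (meson closed_closure compact_eq_bounded_closed bounded_subset)
  then show ?thesis using s sub assms unfolding test_fun_def by blast
qed

lemma test_fun_zero: "test_fun U (\<lambda>x. 0::real)"
  unfolding test_fun_def smooth_fun_def
proof (intro conjI allI)
  show "Ck k (\<lambda>x::'a. 0::real)" for k
  proof (induction k)
    case 0 then show ?case by simp
  next
    case (Suc k)
    have "frechet_derivative (\<lambda>x::'a. 0::real) (at x) = (\<lambda>h. 0)" for x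
      using fd_zero_open[of UNIV "\<lambda>x::'a. 0::real" x] by simp
    then show ?case using Suc by simp
  qed
qed auto

lemma test_fun_mono: "test_fun U f \<Longrightarrow> U \<subseteq> V \<Longrightarrow> test_fun V f"
  unfolding test_fun_def by auto

lemma test_fun_props:
  fixes f :: "'a::euclidean_space \<Rightarrow> real"
  assumes "test_fun U f"
  shows "\<And>x. f differentiable at x" "continuous_on UNIV f"
    "\<And>i. i \<in> Basis \<Longrightarrow> continuous_on UNIV (pd f i)"
    "\<And>i x. i \<in> Basis \<Longrightarrow> pd f i differentiable at x"
    "\<And>i j. i \<in> Basis \<Longrightarrow> j \<in> Basis \<Longrightarrow> continuous_on UNIV (pd (pd f i) j)"
    "compact (supp f)" "supp f \<subseteq> U"
proof -
  have c2: "Ck (Suc (Suc 0)) f" using assms unfolding test_fun_def smooth_fun_def by blast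
  show d: "\<And>x. f differentiable at x" using c2 by simp
  show "continuous_on UNIV f"
    using d by (simp add: continuous_at_imp_continuous_on differentiable_imp_continuous_within)
  show "\<And>i x. i \<in> Basis \<Longrightarrow> pd f i differentiable at x" using c2 by simp
  then show "\<And>i. i \<in> Basis \<Longrightarrow> continuous_on UNIV (pd f i)"
    by (simp add: continuous_at_imp_continuous_on differentiable_imp_continuous_within)
  show "\<And>i j. i \<in> Basis \<Longrightarrow> j \<in> Basis \<Longrightarrow> continuous_on UNIV (pd (pd f i) j)"
    using c2 by simp
  show "compact (supp f)" "supp f \<subseteq> U" using assms unfolding test_fun_def by auto
qed

definition L2 :: "('a::euclidean_space \<Rightarrow> 'b::euclidean_space) \<Rightarrow> bool" where
  "L2 f \<longleftrightarrow> f \<in> borel_measurable lborel \<and> integrable lborel (\<lambda>x. (norm (f x))\<^sup>2)"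

definition N2 :: "('a::euclidean_space \<Rightarrow> 'b::euclidean_space) \<Rightarrow> real" where
  "N2 f = (\<integral>x. (norm (f x))\<^sup>2 \<partial>lborel)"

lemma L2_meas: "L2 f \<Longrightarrow> f \<in> borel_measurable lborel"
  by (simp add: L2_def)

lemma L2_int: "L2 f \<Longrightarrow> integrable lborel (\<lambda>x. (norm (f x))\<^sup>2)"
  by (simp add: L2_def)

lemma sq_sum_bound: "((a::real) + b)\<^sup>2 \<le> 2 * a\<^sup>2 + 2 * b\<^sup>2"
proof -
  have "0 \<le> (a - b)\<^sup>2" by simp
  then show ?thesis by (simp add: power2_diff power2_sum)
qed

lemma prod_sq_bound: "0 \<le> a \<Longrightarrow> 0 \<le> b \<Longrightarrow> (a::real) * b \<le> a\<^sup>2 + b\<^sup>2"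
proof -
  assume "0 \<le> a" "0 \<le> b"
  then have "0 \<le> a * b" by simp
  moreover have "0 \<le> (a - b)\<^sup>2" by simp
  ultimately show ?thesis by (simp add: power2_diff)
qed

lemma N2_nonneg: "0 \<le> N2 f"
  unfolding N2_def by (rule integral_nonneg_AE) auto

lemma L2_add:
  fixes f g :: "'a::euclidean_space \<Rightarrow> 'b::euclidean_space"
  assumes "L2 f" "L2 g"
  shows "L2 (\<lambda>x. f x + g x)"
proof -
  have i: "integrable lborel (\<lambda>x. 2 * (norm (f x))\<^sup>2 + 2 * (norm (g x))\<^sup>2)"
    using assms by (auto simp: L2_def)
  have b: "norm ((norm (f x + g x))\<^sup>2) \<le> norm (2 * (norm (f x))\<^sup>2 + 2 * (norm (g x))\<^sup>2)" for x
  proof -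
    have "norm (f x + g x) \<le> norm (f x) + norm (g x)" by (rule norm_triangle_ineq)
    then have "(norm (f x + g x))\<^sup>2 \<le> (norm (f x) + norm (g x))\<^sup>2"
      by (simp add: power_mono)
    also have "\<dots> \<le> 2 * (norm (f x))\<^sup>2 + 2 * (norm (g x))\<^sup>2"
      by (rule sq_sum_bound)
    finally show ?thesis by simp
  qed
  have [measurable]: "f \<in> borel_measurable lborel" "g \<in> borel_measurable lborel" using assms by (simp_all add: L2_def)
  have m: "(\<lambda>x. f x + g x) \<in> borel_measurable lborel" by measurable
  have m2: "(\<lambda>x. (norm (f x + g x))\<^sup>2) \<in> borel_measurable lborel" by measurable
  have "integrable lborel (\<lambda>x. (norm (f x + g x))\<^sup>2)"
    by (rule Bochner_Integration.integrable_bound[OF i m2], rule AE_I2, rule b)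
  then show ?thesis using m by (simp add: L2_def)
qed

lemma L2_scale:
  fixes f :: "'a::euclidean_space \<Rightarrow> 'b::euclidean_space"
  assumes "L2 f"
  shows "L2 (\<lambda>x. c *\<^sub>R f x)"
proof -
  have "integrable lborel (\<lambda>x. c\<^sup>2 * (norm (f x))\<^sup>2)" using assms by (auto simp: L2_def)
  moreover have "(\<lambda>x. c\<^sup>2 * (norm (f x))\<^sup>2) = (\<lambda>x. (norm (c *\<^sub>R f x))\<^sup>2)"
    by (simp add: power_mult_distrib)
  moreover have [measurable]: "f \<in> borel_measurable lborel" using assms by (simp_all add: L2_def)
  moreover have "(\<lambda>x. c *\<^sub>R f x) \<in> borel_measurable lborel" by measurable
  ultimately show ?thesis by (simp add: L2_def)
qed

lemma L2_uminus: "L2 f \<Longrightarrow> L2 (\<lambda>x. - f x)"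
  using L2_scale[of f "-1"] by simp

lemma L2_diff: "L2 f \<Longrightarrow> L2 g \<Longrightarrow> L2 (\<lambda>x. f x - g x)"
  using L2_add[of f "\<lambda>x. - g x"] L2_uminus[of g] by simp

lemma L2_zero: "L2 (\<lambda>x. 0)"
  by (simp add: L2_def)

lemma L2_inner_int:
  fixes f g :: "'a::euclidean_space \<Rightarrow> 'b::euclidean_space"
  assumes "L2 f" "L2 g"
  shows "integrable lborel (\<lambda>x. f x \<bullet> g x)"
proof -
  have i: "integrable lborel (\<lambda>x. (norm (f x))\<^sup>2 + (norm (g x))\<^sup>2)"
    using assms by (auto simp: L2_def)
  have b: "norm (f x \<bullet> g x) \<le> norm ((norm (f x))\<^sup>2 + (norm (g x))\<^sup>2)" for x
  proof -
    have "norm (f x \<bullet> g x) \<le> norm (f x) * norm (g x)" using Cauchy_Schwarz_ineq2 by simp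
    also have "\<dots> \<le> (norm (f x))\<^sup>2 + (norm (g x))\<^sup>2"
      by (rule prod_sq_bound) simp_all
    finally show ?thesis by simp
  qed
  have [measurable]: "f \<in> borel_measurable lborel" "g \<in> borel_measurable lborel" using assms by (simp_all add: L2_def)
  have m: "(\<lambda>x. f x \<bullet> g x) \<in> borel_measurable lborel" by measurable
  show ?thesis
    by (rule Bochner_Integration.integrable_bound[OF i m], rule AE_I2, rule b)
qed

lemma L2_mult_int:
  fixes f g :: "'a::euclidean_space \<Rightarrow> real"
  assumes "L2 f" "L2 g"
  shows "integrable lborel (\<lambda>x. f x * g x)"
  using L2_inner_int[OF assms] by simp

lemma L2_norm:
  fixes f :: "'a::euclidean_space \<Rightarrow> 'b::euclidean_space"
  assumes "L2 f" shows "L2 (\<lambda>x. norm (f x))"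
proof -
  have [measurable]: "f \<in> borel_measurable lborel" using assms by (simp add: L2_def)
  have "(\<lambda>x. norm (f x)) \<in> borel_measurable lborel" by measurable
  then show ?thesis using assms by (simp add: L2_def)
qed

lemma L2_CS:
  fixes f g :: "'a::euclidean_space \<Rightarrow> 'b::euclidean_space"
  assumes "L2 f" "L2 g"
  shows "\<bar>\<integral>x. f x \<bullet> g x \<partial>lborel\<bar> \<le> sqrt (N2 f) * sqrt (N2 g)"
proof -
  have [measurable]: "f \<in> borel_measurable lborel" "g \<in> borel_measurable lborel"
    using assms by (simp_all add: L2_def)
  define P where "P = (\<integral>x. norm (f x) * norm (g x) \<partial>lborel)"
  have iP: "integrable lborel (\<lambda>x. norm (f x) * norm (g x))"
    using L2_mult_int[OF L2_norm[OF assms(1)] L2_norm[OF assms(2)]] .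
  have P0: "0 \<le> P" unfolding P_def by (rule integral_nonneg_AE) auto
  have "(\<integral>\<^sup>+x. ennreal (norm (f x)) * ennreal (norm (g x)) \<partial>lborel)\<^sup>2
      \<le> (\<integral>\<^sup>+x. ennreal (norm (f x)) ^ 2 \<partial>lborel) * (\<integral>\<^sup>+x. ennreal (norm (g x)) ^ 2 \<partial>lborel)"
    by (rule Cauchy_Schwarz_nn_integral) measurable
  also have "(\<integral>\<^sup>+x. ennreal (norm (f x)) ^ 2 \<partial>lborel) = ennreal (N2 f)"
    unfolding N2_def
    by (subst nn_integral_eq_integral[symmetric]) (use assms in \<open>auto simp: L2_def ennreal_power\<close>)
  also have "(\<integral>\<^sup>+x. ennreal (norm (g x)) ^ 2 \<partial>lborel) = ennreal (N2 g)"
    unfolding N2_def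
    by (subst nn_integral_eq_integral[symmetric]) (use assms in \<open>auto simp: L2_def ennreal_power\<close>)
  also have "(\<integral>\<^sup>+x. ennreal (norm (f x)) * ennreal (norm (g x)) \<partial>lborel) = ennreal P"
    unfolding P_def
    by (subst nn_integral_eq_integral[symmetric]) (use iP in \<open>auto simp: ennreal_mult\<close>)
  finally have "ennreal (P\<^sup>2) \<le> ennreal (N2 f * N2 g)"
    using P0 N2_nonneg[of f] N2_nonneg[of g] by (simp add: ennreal_power ennreal_mult)
  then have "P\<^sup>2 \<le> N2 f * N2 g"
    using N2_nonneg[of f] N2_nonneg[of g] by (simp add: ennreal_le_iff)
  then have "P \<le> sqrt (N2 f * N2 g)" using P0 by (simp add: real_le_rsqrt)
  then have Pb: "P \<le> sqrt (N2 f) * sqrt (N2 g)" by (simp add: real_sqrt_mult)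
  have "\<bar>\<integral>x. f x \<bullet> g x \<partial>lborel\<bar> \<le> (\<integral>x. \<bar>f x \<bullet> g x\<bar> \<partial>lborel)"
    by (rule integral_abs_bound)
  also have "\<dots> \<le> P" unfolding P_def
    by (rule integral_mono[OF _ iP]) (use L2_inner_int[OF assms] Cauchy_Schwarz_ineq2 in auto)
  finally show ?thesis using Pb by linarith
qed

lemma N2_add_le:
  fixes f g :: "'a::euclidean_space \<Rightarrow> 'b::euclidean_space"
  assumes "L2 f" "L2 g"
  shows "N2 (\<lambda>x. f x + g x) \<le> 2 * N2 f + 2 * N2 g"
proof -
  have "N2 (\<lambda>x. f x + g x) \<le> (\<integral>x. 2 * (norm (f x))\<^sup>2 + 2 * (norm (g x))\<^sup>2 \<partial>lborel)"
    unfolding N2_def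
  proof (rule integral_mono)
    show "integrable lborel (\<lambda>x. (norm (f x + g x))\<^sup>2)" using L2_add[OF assms] by (simp add: L2_def)
    show "integrable lborel (\<lambda>x. 2 * (norm (f x))\<^sup>2 + 2 * (norm (g x))\<^sup>2)"
      using assms by (simp add: L2_def)
    fix x
    have "norm (f x + g x) \<le> norm (f x) + norm (g x)" by (rule norm_triangle_ineq)
    then have "(norm (f x + g x))\<^sup>2 \<le> (norm (f x) + norm (g x))\<^sup>2"
      by (simp add: power_mono)
    also have "\<dots> \<le> 2 * (norm (f x))\<^sup>2 + 2 * (norm (g x))\<^sup>2" by (rule sq_sum_bound)
    finally show "(norm (f x + g x))\<^sup>2 \<le> 2 * (norm (f x))\<^sup>2 + 2 * (norm (g x))\<^sup>2" .
  qed
  also have "\<dots> = 2 * N2 f + 2 * N2 g"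
    unfolding N2_def using assms by (simp add: L2_def)
  finally show ?thesis .
qed

lemma N2_diff_le:
  fixes f g :: "'a::euclidean_space \<Rightarrow> 'b::euclidean_space"
  assumes "L2 f" "L2 g"
  shows "N2 (\<lambda>x. f x - g x) \<le> 2 * N2 f + 2 * N2 g"
proof -
  have "N2 (\<lambda>x. - g x) = N2 g" unfolding N2_def by simp
  then show ?thesis using N2_add_le[OF assms(1) L2_uminus[OF assms(2)]] by simp
qed

lemma N2_zero_AE:
  fixes f :: "'a::euclidean_space \<Rightarrow> 'b::euclidean_space"
  assumes "L2 f" "N2 f = 0" shows "AE x in lborel. f x = 0"
proof -
  have "AE x in lborel. (norm (f x))\<^sup>2 = 0"
    using assms integral_nonneg_eq_0_iff_AE[of lborel "\<lambda>x. (norm (f x))\<^sup>2"]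
    by (simp add: L2_def N2_def)
  then show ?thesis by simp
qed

lemma lim_inner:
  fixes f g :: "nat \<Rightarrow> 'a::euclidean_space \<Rightarrow> 'b::euclidean_space"
  assumes Lf: "\<And>n. L2 (f n)" and LF: "L2 F" and Lg: "\<And>n. L2 (g n)" and LG: "L2 G"
    and cf: "(\<lambda>n. N2 (\<lambda>x. f n x - F x)) \<longlonglongrightarrow> 0"
    and cg: "(\<lambda>n. N2 (\<lambda>x. g n x - G x)) \<longlonglongrightarrow> 0"
  shows "(\<lambda>n. \<integral>x. f n x \<bullet> g n x \<partial>lborel) \<longlonglongrightarrow> (\<integral>x. F x \<bullet> G x \<partial>lborel)"
proof -
  define a where "a n = N2 (\<lambda>x. f n x - F x)" for n
  define b where "b n = N2 (\<lambda>x. g n x - G x)" for n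
  define B where "B n = sqrt (a n) * sqrt (2 * b n + 2 * N2 G) + sqrt (N2 F) * sqrt (b n)" for n
  have "B \<longlonglongrightarrow> sqrt 0 * sqrt (2 * 0 + 2 * N2 G) + sqrt (N2 F) * sqrt 0"
    unfolding B_def using cf cg unfolding a_def[symmetric] b_def[symmetric]
    by (intro tendsto_intros)
  then have B0: "B \<longlonglongrightarrow> 0" by simp
  have bound: "norm ((\<integral>x. f n x \<bullet> g n x \<partial>lborel) - (\<integral>x. F x \<bullet> G x \<partial>lborel)) \<le> B n" for n
  proof -
    have L1: "L2 (\<lambda>x. f n x - F x)" using Lf LF by (rule L2_diff)
    have L2': "L2 (\<lambda>x. g n x - G x)" using Lg LG by (rule L2_diff)
    have eq: "(\<integral>x. f n x \<bullet> g n x \<partial>lborel) - (\<integral>x. F x \<bullet> G x \<partial>lborel)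
        = (\<integral>x. (f n x - F x) \<bullet> g n x \<partial>lborel) + (\<integral>x. F x \<bullet> (g n x - G x) \<partial>lborel)"
    proof -
      have "(\<integral>x. (f n x - F x) \<bullet> g n x \<partial>lborel) + (\<integral>x. F x \<bullet> (g n x - G x) \<partial>lborel)
          = (\<integral>x. (f n x - F x) \<bullet> g n x + F x \<bullet> (g n x - G x) \<partial>lborel)"
        using Bochner_Integration.integral_add[OF L2_inner_int[OF L1 Lg] L2_inner_int[OF LF L2']] by simp
      also have "\<dots> = (\<integral>x. f n x \<bullet> g n x - F x \<bullet> G x \<partial>lborel)"
        by (simp add: inner_diff_left inner_diff_right)
      also have "\<dots> = (\<integral>x. f n x \<bullet> g n x \<partial>lborel) - (\<integral>x. F x \<bullet> G x \<partial>lborel)"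
        by (rule Bochner_Integration.integral_diff) (intro L2_inner_int Lf Lg LF LG)+
      finally show ?thesis by simp
    qed
    have "N2 (g n) = N2 (\<lambda>x. (g n x - G x) + G x)" by simp
    also have "\<dots> \<le> 2 * b n + 2 * N2 G" unfolding b_def by (rule N2_add_le[OF L2' LG])
    finally have Ng: "N2 (g n) \<le> 2 * b n + 2 * N2 G" .
    have t1: "\<bar>\<integral>x. (f n x - F x) \<bullet> g n x \<partial>lborel\<bar> \<le> sqrt (a n) * sqrt (2 * b n + 2 * N2 G)"
    proof -
      have "\<bar>\<integral>x. (f n x - F x) \<bullet> g n x \<partial>lborel\<bar> \<le> sqrt (a n) * sqrt (N2 (g n))"
        unfolding a_def by (rule L2_CS[OF L1 Lg])
      also have "\<dots> \<le> sqrt (a n) * sqrt (2 * b n + 2 * N2 G)"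
        by (rule mult_left_mono) (use Ng in \<open>auto simp: a_def N2_nonneg\<close>)
      finally show ?thesis .
    qed
    have t2: "\<bar>\<integral>x. F x \<bullet> (g n x - G x) \<partial>lborel\<bar> \<le> sqrt (N2 F) * sqrt (b n)"
      unfolding b_def by (rule L2_CS[OF LF L2'])
    show ?thesis unfolding eq B_def using t1 t2 by simp
  qed
  have "(\<lambda>n. (\<integral>x. f n x \<bullet> g n x \<partial>lborel) - (\<integral>x. F x \<bullet> G x \<partial>lborel)) \<longlonglongrightarrow> 0"
    by (rule Lim_null_comparison[OF _ B0]) (use bound in auto)
  then show ?thesis by (simp add: Lim_null[symmetric])
qed

lemma cont_compact_int:
  fixes h :: "'a::euclidean_space \<Rightarrow> 'b::euclidean_space"
  assumes "continuous_on UNIV h" "compact C" "\<And>x. x \<notin> C \<Longrightarrow> h x = 0"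
  shows "integrable lborel h"
proof -
  have "integrable lborel (\<lambda>x. indicator C x *\<^sub>R h x)"
    by (rule borel_integrable_compact[OF assms(2)]) (use assms(1) continuous_on_subset in blast)
  moreover have "(\<lambda>x. indicator C x *\<^sub>R h x) = h"
    using assms(3) by (auto simp: indicator_def)
  ultimately show ?thesis by simp
qed

lemma cgrad_inner:
  fixes f :: "'a::euclidean_space \<Rightarrow> real"
  assumes "i \<in> Basis"
  shows "cgrad f x \<bullet> i = pd f i x"
  unfolding cgrad_def using assms by (simp add: inner_sum_left inner_Basis if_distrib cong: if_cong)

lemma cgrad_norm2:
  fixes f :: "'a::euclidean_space \<Rightarrow> real"
  shows "(norm (cgrad f x))\<^sup>2 = (\<Sum>i\<in>Basis. (pd f i x)\<^sup>2)"
  unfolding power2_norm_eq_inner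
  by (subst euclidean_inner) (simp add: cgrad_inner power2_eq_square)

lemma test_cgrad_cont:
  fixes f :: "'a::euclidean_space \<Rightarrow> real"
  assumes "test_fun U f"
  shows "continuous_on UNIV (cgrad f)"
proof -
  have "continuous_on UNIV (\<lambda>x. \<Sum>i\<in>Basis. pd f i x *\<^sub>R i)"
    by (intro continuous_on_sum continuous_on_scaleR continuous_on_const test_fun_props(3)[OF assms])
  then show ?thesis unfolding cgrad_def[abs_def] .
qed

lemma test_cgrad_zero:
  fixes f :: "'a::euclidean_space \<Rightarrow> real"
  assumes "x \<notin> supp f"
  shows "cgrad f x = 0"
  unfolding cgrad_def using outside_supp(2)[OF assms] by simp

lemma test_L2:
  fixes f :: "'a::euclidean_space \<Rightarrow> real"
  assumes "test_fun U f"
  shows "L2 f" "L2 (cgrad f)"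
proof -
  have c: "continuous_on UNIV f" "compact (supp f)" using test_fun_props[OF assms] by auto
  have cg: "continuous_on UNIV (cgrad f)" by (rule test_cgrad_cont[OF assms])
  show "L2 f" unfolding L2_def
  proof
    show "f \<in> borel_measurable lborel" using c by (simp add: borel_measurable_continuous_onI)
    show "integrable lborel (\<lambda>x. (norm (f x))\<^sup>2)"
      by (rule cont_compact_int[OF _ c(2)]) (use c outside_supp(1) in \<open>auto intro!: continuous_intros\<close>)
  qed
  show "L2 (cgrad f)" unfolding L2_def
  proof
    show "cgrad f \<in> borel_measurable lborel" using cg by (simp add: borel_measurable_continuous_onI)
    show "integrable lborel (\<lambda>x. (norm (cgrad f x))\<^sup>2)"
      by (rule cont_compact_int[OF _ c(2)]) (use cg test_cgrad_zero in \<open>auto intro!: continuous_intros\<close>)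
  qed
qed

lemma test_cgrad_lin:
  fixes f g :: "'a::euclidean_space \<Rightarrow> real"
  assumes "test_fun U f" "test_fun V g"
  shows "cgrad (\<lambda>x. a * f x + b * g x) x = a *\<^sub>R cgrad f x + b *\<^sub>R cgrad g x"
  unfolding cgrad_def
  using fd_lin[OF test_fun_props(1)[OF assms(1)] test_fun_props(1)[OF assms(2)]]
  by (simp add: scaleR_sum_right sum.distrib scaleR_add_left)

lemma dir_deriv:
  fixes F :: "'a::euclidean_space \<Rightarrow> real"
  assumes "\<And>y. F differentiable at y"
  shows "((\<lambda>h. F (x + h *\<^sub>R e)) has_real_derivative frechet_derivative F (at (x + h *\<^sub>R e)) e) (at h)"
proof -
  let ?D = "frechet_derivative F (at (x + h *\<^sub>R e))"
  have dF: "(F has_derivative ?D) (at (x + h *\<^sub>R e))"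
    using assms frechet_derivative_works by blast
  have dl: "((\<lambda>h. x + h *\<^sub>R e) has_derivative (\<lambda>k. k *\<^sub>R e)) (at h)"
    by (auto intro!: derivative_eq_intros)
  have "((\<lambda>h. F (x + h *\<^sub>R e)) has_derivative (\<lambda>k. ?D (k *\<^sub>R e))) (at h)"
    using has_derivative_compose[OF dl dF] by (simp add: o_def)
  moreover have "(\<lambda>k. ?D (k *\<^sub>R e)) = (\<lambda>k. ?D e * k)"
    using linear_scale[OF has_derivative_linear[OF dF]] by (auto simp: mult.commute)
  ultimately show ?thesis by (simp add: has_field_derivative_def)
qed

lemma ibp0:
  fixes F :: "'a::euclidean_space \<Rightarrow> real"
  assumes d: "\<And>x. F differentiable at x" and c: "continuous_on UNIV (pd F e)"
    and C: "compact C" and z: "\<And>x. x \<notin> C \<Longrightarrow> F x = 0"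
  shows "integral\<^sup>L lborel (pd F e) = 0"
proof -
  have zC: "\<forall>y\<in>-C. F y = 0" using z by blast
  have oC: "open (-C)" using C by (simp add: compact_imp_closed open_Compl)
  have pz: "pd F e x = 0" if "x \<notin> C" for x
    using fd_zero_open[OF oC zC] that by simp
  obtain M where M: "M > 0" "\<And>y. y \<in> C \<Longrightarrow> norm (pd F e y) \<le> M"
    using compact_imp_bounded[OF compact_continuous_image[OF continuous_on_subset[OF c] C]]
    unfolding bounded_pos by auto
  have Mall: "\<bar>pd F e y\<bar> \<le> M" for y using M pz[of y] by (cases "y \<in> C") auto
  obtain R where R: "R > 0" "\<And>y. y \<in> C \<Longrightarrow> norm y \<le> R"
    using compact_imp_bounded[OF C] unfolding bounded_pos by auto
  have Fc: "continuous_on UNIV F"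
    using d by (simp add: continuous_at_imp_continuous_on differentiable_imp_continuous_within)
  have Fi: "integrable lborel F" by (rule cont_compact_int[OF Fc C z])
  have [measurable]: "F \<in> borel_measurable borel" using Fc by (simp add: borel_measurable_continuous_onI)
  define t where "t n = inverse (real (Suc n))" for n
  have t0: "0 < t n" "t n \<le> 1" for n unfolding t_def by (auto simp: field_simps)
  define s where "s n x = (F (x + t n *\<^sub>R e) - F x) / t n" for n x
  have sm: "s n \<in> borel_measurable lborel" for n unfolding s_def by measurable
  have trans: "integral\<^sup>L lborel (\<lambda>x. F (x + c)) = integral\<^sup>L lborel F"
    "integrable lborel (\<lambda>x. F (x + c))" for c
  proof -
    have "integral\<^sup>L (distr lborel borel ((+) c)) F = integral\<^sup>L lborel (\<lambda>x. F (c + x))"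
      by (rule integral_distr) auto
    then show "integral\<^sup>L lborel (\<lambda>x. F (x + c)) = integral\<^sup>L lborel F"
      by (simp add: lborel_distr_plus add.commute)
    have "integrable (distr lborel borel ((+) c)) F = integrable lborel (\<lambda>x. F (c + x))"
      by (rule integrable_distr_eq) auto
    then show "integrable lborel (\<lambda>x. F (x + c))" using Fi
      by (simp add: lborel_distr_plus add.commute)
  qed
  have s0: "integral\<^sup>L lborel (s n) = 0" for n
  proof -
    have "integral\<^sup>L lborel (s n) = (integral\<^sup>L lborel (\<lambda>x. F (x + t n *\<^sub>R e) - F x)) / t n"
      unfolding s_def by simp
    also have "integral\<^sup>L lborel (\<lambda>x. F (x + t n *\<^sub>R e) - F x) = 0"
      using Bochner_Integration.integral_diff[OF trans(2) Fi, of "t n *\<^sub>R e"] trans(1) by simp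
    finally show ?thesis by simp
  qed
  have lim: "(\<lambda>n. s n x) \<longlonglongrightarrow> pd F e x" for x
  proof -
    have "((\<lambda>h. F (x + h *\<^sub>R e)) has_real_derivative pd F e (x + 0 *\<^sub>R e)) (at 0)"
      by (rule dir_deriv[OF d])
    then have "((\<lambda>h. (F (x + (0 + h) *\<^sub>R e) - F (x + 0 *\<^sub>R e)) / h) \<longlongrightarrow> pd F e x) (at 0)"
      unfolding DERIV_def by simp
    then have l: "((\<lambda>h. (F (x + h *\<^sub>R e) - F x) / h) \<longlongrightarrow> pd F e x) (at 0)" by simp
    have "filterlim t (at 0) sequentially"
    proof -
      have "t \<longlonglongrightarrow> 0" unfolding t_def[abs_def] by (rule LIMSEQ_inverse_real_of_nat)
      moreover have "\<forall>\<^sub>F n in sequentially. t n \<in> UNIV \<and> t n \<noteq> 0"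
        using t0 by (auto intro!: always_eventually simp: less_imp_neq[symmetric])
      ultimately show ?thesis unfolding filterlim_at by simp
    qed
    from filterlim_compose[OF l this] show ?thesis unfolding s_def by simp
  qed
  define R' where "R' = R + norm e"
  define w where "w x = M * indicator (cball (0::'a) R') x" for x
  have wi: "integrable lborel w" unfolding w_def
    by (intro integrable_mult_right integrable_real_indicator) (auto simp: emeasure_compact_finite[OF compact_cball, simplified])
  have bound: "norm (s n x) \<le> w x" for n x
  proof (cases "F (x + t n *\<^sub>R e) - F x = 0")
    case True then show ?thesis using M by (simp add: s_def w_def)
  next
    case False
    then have "x \<in> C \<or> x + t n *\<^sub>R e \<in> C" using z by force
    then have xin: "norm x \<le> R'"
    proof
      assume "x \<in> C" then have "norm x \<le> R" using R by auto
      then show ?thesis using norm_ge_zero[of e] unfolding R'_def by linarith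
    next
      assume "x + t n *\<^sub>R e \<in> C"
      then have "norm (x + t n *\<^sub>R e) \<le> R" using R by auto
      moreover have "norm x \<le> norm (x + t n *\<^sub>R e) + norm (t n *\<^sub>R e)"
        by (metis add_diff_cancel norm_triangle_ineq4)
      moreover have "norm (t n *\<^sub>R e) \<le> norm e" using t0[of n] by (simp add: mult_left_le_one_le)
      ultimately show ?thesis by (simp add: R'_def)
    qed
    obtain zz where zz: "0 < zz" "zz < t n"
      "F (x + t n *\<^sub>R e) - F (x + 0 *\<^sub>R e) = (t n - 0) * pd F e (x + zz *\<^sub>R e)"
      using MVT2[of 0 "t n" "\<lambda>h. F (x + h *\<^sub>R e)" "\<lambda>h. pd F e (x + h *\<^sub>R e)"] t0[of n] dir_deriv[OF d]
      by blast
    have "norm (s n x) = \<bar>pd F e (x + zz *\<^sub>R e)\<bar>" using zz t0[of n] by (simp add: s_def)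
    also have "\<dots> \<le> M" by (rule Mall)
    finally show ?thesis using xin by (simp add: w_def)
  qed
  have cm: "pd F e \<in> borel_measurable lborel" using c by (simp add: borel_measurable_continuous_onI)
  have "(\<lambda>n. integral\<^sup>L lborel (s n)) \<longlonglongrightarrow> integral\<^sup>L lborel (pd F e)"
    by (rule integral_dominated_convergence[OF cm sm wi]) (use lim bound in auto)
  then show ?thesis using s0 by (simp add: LIMSEQ_const_iff)
qed

lemma cont_compact_L2:
  fixes h :: "'a::euclidean_space \<Rightarrow> 'b::euclidean_space"
  assumes "continuous_on UNIV h" "compact C" "\<And>x. x \<notin> C \<Longrightarrow> h x = 0"
  shows "L2 h"
  unfolding L2_def
proof
  show "h \<in> borel_measurable lborel" using assms(1) by (simp add: borel_measurable_continuous_onI)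
  show "integrable lborel (\<lambda>x. (norm (h x))\<^sup>2)"
    by (rule cont_compact_int[OF _ assms(2)]) (use assms in \<open>auto intro!: continuous_intros\<close>)
qed

lemma outside_suppD:
  fixes f :: "'a::euclidean_space \<Rightarrow> real"
  shows "x \<notin> supp f \<Longrightarrow> f x = 0 \<and> (\<forall>i. pd f i x = 0) \<and> (\<forall>i j. pd (pd f i) j x = 0)"
  using outside_supp by blast

lemma fd_mult:
  fixes f G :: "'a::euclidean_space \<Rightarrow> real"
  assumes "f differentiable at x" "G differentiable at x"
  shows "frechet_derivative (\<lambda>x. f x * G x) (at x) i = pd f i x * G x + f x * pd G i x"
proof -
  have "((\<lambda>x. f x * G x) has_derivative
     (\<lambda>h. f x * frechet_derivative G (at x) h + frechet_derivative f (at x) h * G x)) (at x)"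
    using assms by (intro has_derivative_mult) (auto simp: frechet_derivative_works[symmetric])
  from frechet_derivative_at[OF this] show ?thesis by (metis add.commute)
qed

lemma ibp_prod:
  fixes f G :: "'a::euclidean_space \<Rightarrow> real"
  assumes f: "test_fun U f" and i: "i \<in> Basis"
    and Gd: "\<And>x. G differentiable at x" and Gc: "continuous_on UNIV (pd G i)"
  shows "(\<integral>x. pd f i x * G x \<partial>lborel) = - (\<integral>x. f x * pd G i x \<partial>lborel)"
proof -
  have fd: "\<And>x. f differentiable at x" using test_fun_props(1)[OF f] .
  have fc: "continuous_on UNIV f" "continuous_on UNIV (pd f i)" "compact (supp f)"
    using test_fun_props[OF f] i by auto
  have GC: "continuous_on UNIV G"
    using Gd by (simp add: continuous_at_imp_continuous_on differentiable_imp_continuous_within)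
  have eq: "pd (\<lambda>x. f x * G x) i = (\<lambda>x. pd f i x * G x + f x * pd G i x)"
    using fd_mult[OF fd Gd] by auto
  have "integral\<^sup>L lborel (pd (\<lambda>x. f x * G x) i) = 0"
  proof (rule ibp0[OF _ _ fc(3)])
    show "(\<lambda>x. f x * G x) differentiable at x" for x
      using fd Gd unfolding differentiable_def
      by (metis has_derivative_mult)
    show "continuous_on UNIV (pd (\<lambda>x. f x * G x) i)"
      unfolding eq by (intro continuous_intros fc GC Gc)
    show "f x * G x = 0" if "x \<notin> supp f" for x using outside_supp(1)[OF that] by simp
  qed
  then have z: "(\<integral>x. pd f i x * G x + f x * pd G i x \<partial>lborel) = 0" unfolding eq .
  have i1: "integrable lborel (\<lambda>x. pd f i x * G x)"
    by (rule cont_compact_int[OF _ fc(3)]) (use fc GC in \<open>auto intro!: continuous_intros dest!: outside_suppD\<close>)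
  have i2: "integrable lborel (\<lambda>x. f x * pd G i x)"
    by (rule cont_compact_int[OF _ fc(3)]) (use fc Gc in \<open>auto intro!: continuous_intros dest!: outside_suppD\<close>)
  show ?thesis using z Bochner_Integration.integral_add[OF i1 i2] by simp
qed

lemma ibp_grad:
  fixes f g :: "'a::euclidean_space \<Rightarrow> real"
  assumes f: "test_fun U f" and g: "test_fun V g"
  shows "(\<integral>x. cgrad f x \<bullet> cgrad g x \<partial>lborel)
     = - (\<integral>x. f x * (\<Sum>i\<in>Basis. pd (pd g i) i x) \<partial>lborel)"
proof -
  have fc: "compact (supp f)" using test_fun_props[OF f] by auto
  have ii: "integrable lborel (\<lambda>x. f x * pd (pd g i) i x)" if "i \<in> Basis" for i
    by (rule cont_compact_int[OF _ fc])
      (use test_fun_props[OF f] test_fun_props[OF g] that in \<open>auto intro!: continuous_intros dest!: outside_suppD\<close>)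
  have ij: "integrable lborel (\<lambda>x. pd f i x * pd g i x)" if "i \<in> Basis" for i
    by (rule cont_compact_int[OF _ fc])
      (use test_fun_props[OF f] test_fun_props[OF g] that in \<open>auto intro!: continuous_intros dest!: outside_suppD\<close>)
  have "(\<integral>x. cgrad f x \<bullet> cgrad g x \<partial>lborel) = (\<integral>x. (\<Sum>i\<in>Basis. pd f i x * pd g i x) \<partial>lborel)"
    by (subst euclidean_inner) (simp add: cgrad_inner)
  also have "\<dots> = (\<Sum>i\<in>Basis. (\<integral>x. pd f i x * pd g i x \<partial>lborel))"
    by (rule Bochner_Integration.integral_sum) (use ij in auto)
  also have "\<dots> = (\<Sum>i\<in>Basis. - (\<integral>x. f x * pd (pd g i) i x \<partial>lborel))"
  proof (rule sum.cong[OF refl])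
    fix i :: 'a assume i: "i \<in> Basis"
    show "(\<integral>x. pd f i x * pd g i x \<partial>lborel) = - (\<integral>x. f x * pd (pd g i) i x \<partial>lborel)"
      by (rule ibp_prod[OF f i]) (use test_fun_props[OF g] i in auto)
  qed
  also have "\<dots> = - (\<integral>x. (\<Sum>i\<in>Basis. f x * pd (pd g i) i x) \<partial>lborel)"
    by (subst Bochner_Integration.integral_sum) (use ii in \<open>auto simp: sum_negf\<close>)
  finally show ?thesis by (simp add: sum_distrib_left)
qed

lemma poincare:
  fixes f :: "'a::euclidean_space \<Rightarrow> real" and e :: 'a
  assumes f: "test_fun U f" and U: "U \<subseteq> cball 0 R" and R: "0 \<le> R" and e: "e \<in> Basis"
  shows "N2 f \<le> 4 * R\<^sup>2 * N2 (cgrad f)"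
proof -
  have fd: "\<And>x. f differentiable at x" using test_fun_props(1)[OF f] .
  have fc: "continuous_on UNIV f" "continuous_on UNIV (pd f e)" "compact (supp f)"
    using test_fun_props[OF f] e by auto
  define G where "G x = (x \<bullet> e) * f x" for x
  have hasG: "(G has_derivative (\<lambda>h. (x \<bullet> e) * frechet_derivative f (at x) h + (h \<bullet> e) * f x)) (at x)" for x
    unfolding G_def
    by (rule has_derivative_mult[OF has_derivative_inner_left[OF has_derivative_ident]
          frechet_derivative_works[THEN iffD1, OF fd]])
  have Gd: "G differentiable at x" for x using hasG[of x] unfolding differentiable_def by blast
  have Gpd: "pd G e x = f x + (x \<bullet> e) * pd f e x" for x
  proof -
    have "frechet_derivative G (at x) = (\<lambda>h. (x \<bullet> e) * frechet_derivative f (at x) h + (h \<bullet> e) * f x)"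
      using frechet_derivative_at[OF hasG[of x]] by simp
    then show ?thesis using e by simp
  qed
  have Gc: "continuous_on UNIV (pd G e)"
    unfolding Gpd by (intro continuous_intros fc)
  have "(\<integral>x. pd f e x * G x \<partial>lborel) = - (\<integral>x. f x * pd G e x \<partial>lborel)"
    by (rule ibp_prod[OF f e Gd Gc])
  define A where "A = N2 f"
  define B where "B = N2 (cgrad f)"
  have A0: "0 \<le> A" "0 \<le> B" unfolding A_def B_def by (simp_all add: N2_nonneg)
  have LG: "L2 G"
    by (rule cont_compact_L2[OF _ fc(3)]) (use fc in \<open>auto intro!: continuous_intros dest!: outside_suppD simp: G_def\<close>)
  have Lp: "L2 (pd f e)"
    by (rule cont_compact_L2[OF _ fc(3)]) (use fc in \<open>auto intro!: continuous_intros dest!: outside_suppD\<close>)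
  have Lf: "L2 f" by (rule test_L2(1)[OF f])
  have Lgr: "L2 (cgrad f)" by (rule test_L2(2)[OF f])
  have iG: "integrable lborel (\<lambda>x. pd f e x * G x)" using L2_mult_int[OF Lp LG] .
  have iff: "integrable lborel (\<lambda>x. f x * f x)" using L2_mult_int[OF Lf Lf] .
  have ibp: "(\<integral>x. pd f e x * G x \<partial>lborel) = - (\<integral>x. f x * f x + pd f e x * G x \<partial>lborel)"
  proof -
    have "(\<integral>x. pd f e x * G x \<partial>lborel) = - (\<integral>x. f x * pd G e x \<partial>lborel)"
      by (rule ibp_prod[OF f e Gd Gc])
    also have "(\<lambda>x. f x * pd G e x) = (\<lambda>x. f x * f x + pd f e x * G x)"
      by (auto simp: Gpd G_def algebra_simps)
    finally show ?thesis .
  qed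
  have AI: "A = - 2 * (\<integral>x. pd f e x * G x \<partial>lborel)"
  proof -
    have "A = (\<integral>x. f x * f x \<partial>lborel)" unfolding A_def N2_def by (simp add: power2_eq_square)
    moreover have "(\<integral>x. f x * f x + pd f e x * G x \<partial>lborel)
        = (\<integral>x. f x * f x \<partial>lborel) + (\<integral>x. pd f e x * G x \<partial>lborel)"
      by (rule Bochner_Integration.integral_add[OF iff iG])
    ultimately show ?thesis using ibp by linarith
  qed
  have NG: "N2 G \<le> R\<^sup>2 * A"
  proof -
    have "N2 G \<le> (\<integral>x. R\<^sup>2 * (norm (f x))\<^sup>2 \<partial>lborel)"
      unfolding N2_def
    proof (rule integral_mono)
      show "integrable lborel (\<lambda>x. (norm (G x))\<^sup>2)" using LG by (simp add: L2_def)
      show "integrable lborel (\<lambda>x. R\<^sup>2 * (norm (f x))\<^sup>2)" using Lf by (simp add: L2_def)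
      fix x
      show "(norm (G x))\<^sup>2 \<le> R\<^sup>2 * (norm (f x))\<^sup>2"
      proof (cases "x \<in> supp f")
        case True
        then have "norm x \<le> R" using U test_fun_props(7)[OF f] by auto
        moreover have "\<bar>x \<bullet> e\<bar> \<le> norm x" using e by (metis Basis_le_norm)
        ultimately have "\<bar>x \<bullet> e\<bar> \<le> R" by linarith
        then have "(x \<bullet> e)\<^sup>2 \<le> R\<^sup>2" by (metis abs_ge_zero power2_abs power_mono)
        then show ?thesis unfolding G_def
          by (simp add: power_mult_distrib mult_right_mono)
      next
        case False then show ?thesis using outside_supp(1)[OF False] by (simp add: G_def)
      qed
    qed
    also have "\<dots> = R\<^sup>2 * A" unfolding A_def N2_def by simp
    finally show ?thesis .
  qed
  have Np: "N2 (pd f e) \<le> B"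
    unfolding B_def N2_def
  proof (rule integral_mono)
    show "integrable lborel (\<lambda>x. (norm (pd f e x))\<^sup>2)" using Lp by (simp add: L2_def)
    show "integrable lborel (\<lambda>x. (norm (cgrad f x))\<^sup>2)" using Lgr by (simp add: L2_def)
    fix x
    have "(pd f e x)\<^sup>2 \<le> (\<Sum>i\<in>Basis. (pd f i x)\<^sup>2)"
      by (rule member_le_sum[OF e]) auto
    then show "(norm (pd f e x))\<^sup>2 \<le> (norm (cgrad f x))\<^sup>2" by (simp add: cgrad_norm2)
  qed
  have "\<bar>\<integral>x. pd f e x * G x \<partial>lborel\<bar> \<le> sqrt (N2 (pd f e)) * sqrt (N2 G)"
    using L2_CS[OF Lp LG] by simp
  also have "\<dots> \<le> sqrt B * sqrt (R\<^sup>2 * A)"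
    by (intro mult_mono real_sqrt_le_mono Np NG) (auto simp: B_def N2_nonneg)
  also have "\<dots> = R * sqrt A * sqrt B" using R by (simp add: real_sqrt_mult)
  finally have I: "\<bar>\<integral>x. pd f e x * G x \<partial>lborel\<bar> \<le> R * sqrt A * sqrt B" .
  have AA: "A \<le> 2 * R * sqrt A * sqrt B"
  proof -
    have "A \<le> 2 * \<bar>\<integral>x. pd f e x * G x \<partial>lborel\<bar>" using AI by linarith
    then show ?thesis using I by linarith
  qed
  show ?thesis
  proof (cases "A = 0")
    case True
    have "0 \<le> 4 * R\<^sup>2 * B" using A0 by simp
    then show ?thesis using True unfolding A_def B_def by simp
  next
    case False
    define a where "a = sqrt A"
    have ap: "0 < a" using False A0 by (simp add: a_def)
    have Aa: "A = a * a" using A0 by (simp add: a_def)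
    have "a * a \<le> a * (2 * R * sqrt B)"
    proof -
      have "A \<le> 2 * R * a * sqrt B" using AA by (simp add: a_def)
      then show ?thesis using Aa by (simp add: algebra_simps)
    qed
    then have "a \<le> 2 * R * sqrt B" using ap by simp
    then have "a * a \<le> (2 * R * sqrt B) * (2 * R * sqrt B)"
      using ap by (intro mult_mono) auto
    also have "\<dots> = 4 * R\<^sup>2 * (sqrt B * sqrt B)" by (simp add: power2_eq_square algebra_simps)
    also have "\<dots> = 4 * R\<^sup>2 * B" using A0 by simp
    finally have "A \<le> 4 * R\<^sup>2 * B" using Aa by simp
    then show ?thesis unfolding A_def B_def .
  qed
qed

definition approx :: "'a::euclidean_space set \<Rightarrow> ('a \<Rightarrow> real) \<Rightarrow> ('a \<Rightarrow> 'a) \<Rightarrow> (nat \<Rightarrow> 'a \<Rightarrow> real) \<Rightarrow> bool" where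
  "approx U u g \<phi> \<longleftrightarrow> (\<forall>n. test_fun U (\<phi> n)) \<and> L2 u \<and> L2 g \<and>
     (\<lambda>n. N2 (\<lambda>x. \<phi> n x - u x)) \<longlonglongrightarrow> 0 \<and> (\<lambda>n. N2 (\<lambda>x. cgrad (\<phi> n) x - g x)) \<longlonglongrightarrow> 0"

lemma nn_N2:
  fixes h :: "'a::euclidean_space \<Rightarrow> 'b::euclidean_space"
  assumes "L2 h"
  shows "(\<integral>\<^sup>+x. ennreal ((norm (h x))\<^sup>2) \<partial>lborel) = ennreal (N2 h)"
  unfolding N2_def by (rule nn_integral_eq_integral) (use assms in \<open>auto simp: L2_def\<close>)

lemma nn_conv:
  fixes h :: "nat \<Rightarrow> 'a::euclidean_space \<Rightarrow> 'b::euclidean_space"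
  assumes "\<And>n. L2 (h n)"
  shows "((\<lambda>n. \<integral>\<^sup>+x. ennreal ((norm (h n x))\<^sup>2) \<partial>lborel) \<longlonglongrightarrow> 0) \<longleftrightarrow> ((\<lambda>n. N2 (h n)) \<longlonglongrightarrow> 0)"
proof -
  have "((\<lambda>n. \<integral>\<^sup>+x. ennreal ((norm (h n x))\<^sup>2) \<partial>lborel) \<longlonglongrightarrow> 0) \<longleftrightarrow>
        ((\<lambda>n. ennreal (N2 (h n))) \<longlonglongrightarrow> ennreal 0)"
    using nn_N2[OF assms] by simp
  also have "\<dots> \<longleftrightarrow> ((\<lambda>n. N2 (h n)) \<longlonglongrightarrow> 0)"
    by (rule tendsto_ennreal_iff) (auto simp: N2_nonneg)
  finally show ?thesis .
qed

lemma nn_L2: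
  fixes h :: "'a::euclidean_space \<Rightarrow> 'b::euclidean_space"
  assumes m: "h \<in> borel_measurable lborel" and f: "(\<integral>\<^sup>+x. ennreal ((norm (h x))\<^sup>2) \<partial>lborel) < \<infinity>"
  shows "L2 h"
  unfolding L2_def
proof
  show "h \<in> borel_measurable lborel" by (rule m)
  have [measurable]: "h \<in> borel_measurable borel" using m by simp
  show "integrable lborel (\<lambda>x. (norm (h x))\<^sup>2)"
    by (rule integrableI_nonneg) (use f in auto)
qed

lemma nn_eventually_L2:
  fixes h :: "nat \<Rightarrow> 'a::euclidean_space \<Rightarrow> 'b::euclidean_space"
  assumes m: "\<And>n. h n \<in> borel_measurable lborel"
    and t: "(\<lambda>n. \<integral>\<^sup>+x. ennreal ((norm (h n x))\<^sup>2) \<partial>lborel) \<longlonglongrightarrow> 0"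
  shows "\<exists>n. L2 (h n)"
proof -
  have "\<forall>\<^sub>F n in sequentially. (\<integral>\<^sup>+x. ennreal ((norm (h n x))\<^sup>2) \<partial>lborel) < 1"
    using order_tendstoD(2)[OF t] by simp
  then obtain N where "\<forall>n\<ge>N. (\<integral>\<^sup>+x. ennreal ((norm (h n x))\<^sup>2) \<partial>lborel) < 1"
    unfolding eventually_sequentially by blast
  then have "(\<integral>\<^sup>+x. ennreal ((norm (h N x))\<^sup>2) \<partial>lborel) < 1" by blast
  then have "(\<integral>\<^sup>+x. ennreal ((norm (h N x))\<^sup>2) \<partial>lborel) < \<infinity>"
    using ennreal_one_less_top by (simp add: order.strict_trans)
  then show ?thesis using nn_L2[OF m] by blast
qed

lemma H10_grad_approx:
  fixes u :: "'a::euclidean_space \<Rightarrow> real"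
  assumes "H10_grad U u g"
  shows "\<exists>\<phi>. approx U u g \<phi>"
proof -
  obtain \<phi> where um: "u \<in> borel_measurable lborel" and gm: "g \<in> borel_measurable lborel"
    and t: "\<forall>n. test_fun U (\<phi> n)"
    and c1: "(\<lambda>n. \<integral>\<^sup>+ x. ennreal ((\<phi> n x - u x)\<^sup>2) \<partial>lborel) \<longlonglongrightarrow> 0"
    and c2: "(\<lambda>n. \<integral>\<^sup>+ x. ennreal ((norm (cgrad (\<phi> n) x - g x))\<^sup>2) \<partial>lborel) \<longlonglongrightarrow> 0"
    using assms unfolding H10_grad_def by blast
  have Lp: "L2 (\<phi> n)" "L2 (cgrad (\<phi> n))" for n using test_L2 t by blast+
  have c1': "(\<lambda>n. \<integral>\<^sup>+ x. ennreal ((norm (\<phi> n x - u x))\<^sup>2) \<partial>lborel) \<longlonglongrightarrow> 0"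
    using c1 by simp
  have m1: "(\<lambda>x. \<phi> n x - u x) \<in> borel_measurable lborel" for n
    using Lp(1)[of n] um by (intro borel_measurable_diff) (auto simp: L2_def)
  have m2: "(\<lambda>x. cgrad (\<phi> n) x - g x) \<in> borel_measurable lborel" for n
    using Lp(2)[of n] gm by (intro borel_measurable_diff) (auto simp: L2_def)
  obtain n1 where n1: "L2 (\<lambda>x. \<phi> n1 x - u x)" using nn_eventually_L2[OF m1 c1'] by blast
  obtain n2 where n2: "L2 (\<lambda>x. cgrad (\<phi> n2) x - g x)" using nn_eventually_L2[OF m2 c2] by blast
  have Lu: "L2 u" using L2_diff[OF Lp(1)[of n1] n1] by simp
  have Lg: "L2 g" using L2_diff[OF Lp(2)[of n2] n2] by simp
  have d1: "\<And>n. L2 (\<lambda>x. \<phi> n x - u x)" using Lp(1) Lu by (rule L2_diff)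
  have d2: "\<And>n. L2 (\<lambda>x. cgrad (\<phi> n) x - g x)" using Lp(2) Lg by (rule L2_diff)
  have "approx U u g \<phi>"
    unfolding approx_def using t Lu Lg nn_conv[OF d1] nn_conv[OF d2] c1' c2 by simp
  then show ?thesis by blast
qed

lemma approx_H10:
  fixes u :: "'a::euclidean_space \<Rightarrow> real"
  assumes "approx U u g \<phi>"
  shows "H10_grad U u g"
proof -
  have t: "\<forall>n. test_fun U (\<phi> n)" and Lu: "L2 u" and Lg: "L2 g"
    and c1: "(\<lambda>n. N2 (\<lambda>x. \<phi> n x - u x)) \<longlonglongrightarrow> 0"
    and c2: "(\<lambda>n. N2 (\<lambda>x. cgrad (\<phi> n) x - g x)) \<longlonglongrightarrow> 0"
    using assms unfolding approx_def by auto
  have Lp: "L2 (\<phi> n)" "L2 (cgrad (\<phi> n))" for n using test_L2 t by blast+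
  have d1: "\<And>n. L2 (\<lambda>x. \<phi> n x - u x)" using Lp(1) Lu by (rule L2_diff)
  have d2: "\<And>n. L2 (\<lambda>x. cgrad (\<phi> n) x - g x)" using Lp(2) Lg by (rule L2_diff)
  show ?thesis unfolding H10_grad_def
    using Lu Lg t nn_conv[OF d1] nn_conv[OF d2] c1 c2 by (auto simp: L2_def)
qed

lemma N2_scale: "N2 (\<lambda>x. c *\<^sub>R f x) = c\<^sup>2 * N2 f"
  unfolding N2_def by (simp add: power_mult_distrib)

lemma N2_scale_real: "N2 (\<lambda>x. c * (f x :: real)) = c\<^sup>2 * N2 f"
  using N2_scale[of c f] by simp

lemma N2_lin_le:
  fixes f g :: "'a::euclidean_space \<Rightarrow> 'b::euclidean_space"
  assumes "L2 f" "L2 g"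
  shows "N2 (\<lambda>x. a *\<^sub>R f x + b *\<^sub>R g x) \<le> 2 * a\<^sup>2 * N2 f + 2 * b\<^sup>2 * N2 g"
  using N2_add_le[OF L2_scale[OF assms(1), of a] L2_scale[OF assms(2), of b]]
  by (simp add: N2_scale)

lemma approx_lin:
  fixes u v :: "'a::euclidean_space \<Rightarrow> real"
  assumes A: "approx U u g \<phi>" and B: "approx U v h \<psi>"
  shows "approx U (\<lambda>x. a * u x + b * v x) (\<lambda>x. a *\<^sub>R g x + b *\<^sub>R h x) (\<lambda>n x. a * \<phi> n x + b * \<psi> n x)"
proof -
  have t: "\<And>n. test_fun U (\<phi> n)" and Lu: "L2 u" and Lg: "L2 g"
    and c1: "(\<lambda>n. N2 (\<lambda>x. \<phi> n x - u x)) \<longlonglongrightarrow> 0"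
    and c2: "(\<lambda>n. N2 (\<lambda>x. cgrad (\<phi> n) x - g x)) \<longlonglongrightarrow> 0"
    using A unfolding approx_def by auto
  have s: "\<And>n. test_fun U (\<psi> n)" and Lv: "L2 v" and Lh: "L2 h"
    and e1: "(\<lambda>n. N2 (\<lambda>x. \<psi> n x - v x)) \<longlonglongrightarrow> 0"
    and e2: "(\<lambda>n. N2 (\<lambda>x. cgrad (\<psi> n) x - h x)) \<longlonglongrightarrow> 0"
    using B unfolding approx_def by auto
  have Lp: "L2 (\<phi> n)" "L2 (cgrad (\<phi> n))" "L2 (\<psi> n)" "L2 (cgrad (\<psi> n))" for n
    using test_L2 t s by blast+
  have t': "test_fun U (\<lambda>x. a * \<phi> n x + b * \<psi> n x)" for n by (rule test_fun_lin[OF t s])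
  have L1: "L2 (\<lambda>x. a * u x + b * v x)" using L2_add[OF L2_scale[OF Lu, of a] L2_scale[OF Lv, of b]] by simp
  have L2': "L2 (\<lambda>x. a *\<^sub>R g x + b *\<^sub>R h x)" using L2_add[OF L2_scale[OF Lg, of a] L2_scale[OF Lh, of b]] by simp
  have conv1: "(\<lambda>n. N2 (\<lambda>x. (a * \<phi> n x + b * \<psi> n x) - (a * u x + b * v x))) \<longlonglongrightarrow> 0"
  proof (rule tendsto_sandwich[of "\<lambda>n. 0" _ _ "\<lambda>n. 2 * a\<^sup>2 * N2 (\<lambda>x. \<phi> n x - u x) + 2 * b\<^sup>2 * N2 (\<lambda>x. \<psi> n x - v x)"])
    show "\<forall>\<^sub>F n in sequentially. 0 \<le> N2 (\<lambda>x. (a * \<phi> n x + b * \<psi> n x) - (a * u x + b * v x))"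
      by (simp add: N2_nonneg)
    show "\<forall>\<^sub>F n in sequentially. N2 (\<lambda>x. (a * \<phi> n x + b * \<psi> n x) - (a * u x + b * v x))
       \<le> 2 * a\<^sup>2 * N2 (\<lambda>x. \<phi> n x - u x) + 2 * b\<^sup>2 * N2 (\<lambda>x. \<psi> n x - v x)"
    proof (intro always_eventually allI)
      fix n
      have "(\<lambda>x. (a * \<phi> n x + b * \<psi> n x) - (a * u x + b * v x)) = (\<lambda>x. a *\<^sub>R (\<phi> n x - u x) + b *\<^sub>R (\<psi> n x - v x))"
        by (auto simp: algebra_simps)
      then show "N2 (\<lambda>x. (a * \<phi> n x + b * \<psi> n x) - (a * u x + b * v x))
       \<le> 2 * a\<^sup>2 * N2 (\<lambda>x. \<phi> n x - u x) + 2 * b\<^sup>2 * N2 (\<lambda>x. \<psi> n x - v x)"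
        using N2_lin_le[OF L2_diff[OF Lp(1)[of n] Lu] L2_diff[OF Lp(3)[of n] Lv], of a b] by simp
    qed
    have "(\<lambda>n. 2 * a\<^sup>2 * N2 (\<lambda>x. \<phi> n x - u x) + 2 * b\<^sup>2 * N2 (\<lambda>x. \<psi> n x - v x)) \<longlonglongrightarrow> 2 * a\<^sup>2 * 0 + 2 * b\<^sup>2 * 0"
      by (intro tendsto_intros c1 e1)
    then show "(\<lambda>n. 2 * a\<^sup>2 * N2 (\<lambda>x. \<phi> n x - u x) + 2 * b\<^sup>2 * N2 (\<lambda>x. \<psi> n x - v x)) \<longlonglongrightarrow> 0" by simp
  qed simp
  have conv2: "(\<lambda>n. N2 (\<lambda>x. cgrad (\<lambda>x. a * \<phi> n x + b * \<psi> n x) x - (a *\<^sub>R g x + b *\<^sub>R h x))) \<longlonglongrightarrow> 0"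
  proof (rule tendsto_sandwich[of "\<lambda>n. 0" _ _ "\<lambda>n. 2 * a\<^sup>2 * N2 (\<lambda>x. cgrad (\<phi> n) x - g x) + 2 * b\<^sup>2 * N2 (\<lambda>x. cgrad (\<psi> n) x - h x)"])
    show "\<forall>\<^sub>F n in sequentially. 0 \<le> N2 (\<lambda>x. cgrad (\<lambda>x. a * \<phi> n x + b * \<psi> n x) x - (a *\<^sub>R g x + b *\<^sub>R h x))"
      by (simp add: N2_nonneg)
    show "\<forall>\<^sub>F n in sequentially. N2 (\<lambda>x. cgrad (\<lambda>x. a * \<phi> n x + b * \<psi> n x) x - (a *\<^sub>R g x + b *\<^sub>R h x))
       \<le> 2 * a\<^sup>2 * N2 (\<lambda>x. cgrad (\<phi> n) x - g x) + 2 * b\<^sup>2 * N2 (\<lambda>x. cgrad (\<psi> n) x - h x)"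
    proof (intro always_eventually allI)
      fix n
      have "(\<lambda>x. cgrad (\<lambda>x. a * \<phi> n x + b * \<psi> n x) x - (a *\<^sub>R g x + b *\<^sub>R h x))
          = (\<lambda>x. a *\<^sub>R (cgrad (\<phi> n) x - g x) + b *\<^sub>R (cgrad (\<psi> n) x - h x))"
        using test_cgrad_lin[OF t s] by (auto simp: algebra_simps)
      then show "N2 (\<lambda>x. cgrad (\<lambda>x. a * \<phi> n x + b * \<psi> n x) x - (a *\<^sub>R g x + b *\<^sub>R h x))
       \<le> 2 * a\<^sup>2 * N2 (\<lambda>x. cgrad (\<phi> n) x - g x) + 2 * b\<^sup>2 * N2 (\<lambda>x. cgrad (\<psi> n) x - h x)"
        using N2_lin_le[OF L2_diff[OF Lp(2)[of n] Lg] L2_diff[OF Lp(4)[of n] Lh], of a b] by simp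
    qed
    have "(\<lambda>n. 2 * a\<^sup>2 * N2 (\<lambda>x. cgrad (\<phi> n) x - g x) + 2 * b\<^sup>2 * N2 (\<lambda>x. cgrad (\<psi> n) x - h x)) \<longlonglongrightarrow> 2 * a\<^sup>2 * 0 + 2 * b\<^sup>2 * 0"
      by (intro tendsto_intros c2 e2)
    then show "(\<lambda>n. 2 * a\<^sup>2 * N2 (\<lambda>x. cgrad (\<phi> n) x - g x) + 2 * b\<^sup>2 * N2 (\<lambda>x. cgrad (\<psi> n) x - h x)) \<longlonglongrightarrow> 0" by simp
  qed simp
  show ?thesis unfolding approx_def using t' L1 L2' conv1 conv2 by simp
qed

lemma approx_mono: "approx U u g \<phi> \<Longrightarrow> U \<subseteq> V \<Longrightarrow> approx V u g \<phi>"
  unfolding approx_def using test_fun_mono by blast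

lemma N2_self_inner: "N2 h = (\<integral>x. h x \<bullet> h x \<partial>lborel)"
  unfolding N2_def by (simp add: power2_norm_eq_inner)

lemma core_unique:
  fixes ch :: "nat \<Rightarrow> 'a::euclidean_space \<Rightarrow> real"
  assumes t: "\<And>n. test_fun UNIV (ch n)" and Lh: "L2 h"
    and c1: "(\<lambda>n. N2 (ch n)) \<longlonglongrightarrow> 0"
    and c2: "(\<lambda>n. N2 (\<lambda>x. cgrad (ch n) x - h x)) \<longlonglongrightarrow> 0"
  shows "AE x in lborel. h x = 0"
proof -
  have Lc: "L2 (ch n)" "L2 (cgrad (ch n))" for n using test_L2 t by blast+
  define Lap where "Lap m x = (\<Sum>i\<in>Basis. pd (pd (ch m) i) i x)" for m x
  have LL: "L2 (Lap m)" for m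
  proof -
    have fc: "compact (supp (ch m))" using test_fun_props[OF t] by blast
    show ?thesis unfolding Lap_def
      by (rule cont_compact_L2[OF _ fc])
        (use test_fun_props[OF t[of m]] in \<open>auto intro!: continuous_intros dest!: outside_suppD\<close>)
  qed
  have orth: "(\<integral>x. h x \<bullet> cgrad (ch m) x \<partial>lborel) = 0" for m
  proof -
    have eq: "(\<integral>x. cgrad (ch n) x \<bullet> cgrad (ch m) x \<partial>lborel) = - (\<integral>x. ch n x * Lap m x \<partial>lborel)" for n
      unfolding Lap_def by (rule ibp_grad[OF t t])
    have b: "\<bar>\<integral>x. ch n x * Lap m x \<partial>lborel\<bar> \<le> sqrt (N2 (ch n)) * sqrt (N2 (Lap m))" for n
      using L2_CS[OF Lc(1)[of n] LL[of m]] by simp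
    have "(\<lambda>n. sqrt (N2 (ch n)) * sqrt (N2 (Lap m))) \<longlonglongrightarrow> sqrt 0 * sqrt (N2 (Lap m))"
      by (intro tendsto_intros c1)
    then have "(\<lambda>n. sqrt (N2 (ch n)) * sqrt (N2 (Lap m))) \<longlonglongrightarrow> 0" by simp
    then have "(\<lambda>n. \<integral>x. ch n x * Lap m x \<partial>lborel) \<longlonglongrightarrow> 0"
      by (rule Lim_null_comparison[rotated]) (use b in auto)
    then have z: "(\<lambda>n. \<integral>x. cgrad (ch n) x \<bullet> cgrad (ch m) x \<partial>lborel) \<longlonglongrightarrow> 0"
      unfolding eq using tendsto_minus by fastforce
    have "(\<lambda>n. \<integral>x. cgrad (ch n) x \<bullet> cgrad (ch m) x \<partial>lborel) \<longlonglongrightarrow> (\<integral>x. h x \<bullet> cgrad (ch m) x \<partial>lborel)"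
      by (rule lim_inner[OF Lc(2) Lh Lc(2) Lc(2) c2]) (simp add: N2_def)
    from LIMSEQ_unique[OF this z] show ?thesis .
  qed
  have "(\<lambda>m. \<integral>x. h x \<bullet> cgrad (ch m) x \<partial>lborel) \<longlonglongrightarrow> (\<integral>x. h x \<bullet> h x \<partial>lborel)"
    by (rule lim_inner[OF Lh Lh Lc(2) Lh _ c2]) (simp add: N2_def)
  then have "(\<integral>x. h x \<bullet> h x \<partial>lborel) = 0" using orth by (simp add: LIMSEQ_const_iff)
  then have "N2 h = 0" by (simp add: N2_self_inner)
  then show ?thesis by (rule N2_zero_AE[OF Lh])
qed

lemma grad_unique:
  fixes u :: "'a::euclidean_space \<Rightarrow> real"
  assumes A: "approx U u g \<phi>" and B: "approx V u g' \<psi>"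
  shows "AE x in lborel. g x = g' x"
proof -
  have AU: "approx UNIV u g \<phi>" and BU: "approx UNIV u g' \<psi>" using A B approx_mono by blast+
  have C: "approx UNIV (\<lambda>x. 1 * u x + (-1) * u x) (\<lambda>x. 1 *\<^sub>R g x + (-1) *\<^sub>R g' x)
      (\<lambda>n x. 1 * \<phi> n x + (-1) * \<psi> n x)"
    by (rule approx_lin[OF AU BU])
  define ch where "ch n x = 1 * \<phi> n x + (-1) * \<psi> n x" for n x
  define h where "h x = 1 *\<^sub>R g x + (-1) *\<^sub>R g' x" for x
  have C': "approx UNIV (\<lambda>x. 0) h ch" using C unfolding ch_def[abs_def] h_def[abs_def] by simp
  then have "AE x in lborel. h x = 0"
    unfolding approx_def by (intro core_unique[of ch h]) auto
  then show ?thesis unfolding h_def by auto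
qed

lemma approx_vanish:
  fixes u :: "'a::euclidean_space \<Rightarrow> real"
  assumes A: "approx U u g \<phi>"
  shows "AE x in lborel. x \<notin> U \<longrightarrow> u x = 0" "AE x in lborel. x \<notin> U \<longrightarrow> g x = 0"
proof -
  have t: "\<And>n. test_fun U (\<phi> n)" and Lu: "L2 u" and Lg: "L2 g"
    and c1: "(\<lambda>n. N2 (\<lambda>x. \<phi> n x - u x)) \<longlonglongrightarrow> 0"
    and c2: "(\<lambda>n. N2 (\<lambda>x. cgrad (\<phi> n) x - g x)) \<longlonglongrightarrow> 0"
    using A unfolding approx_def by auto
  have Lp: "L2 (\<phi> n)" "L2 (cgrad (\<phi> n))" for n using test_L2 t by blast+
  define S where "S = (\<Union>n. supp (\<phi> n))"
  have SU: "S \<subseteq> U" unfolding S_def using test_fun_props(7)[OF t] by blast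
  have Sm: "S \<in> sets borel" unfolding S_def
    by (rule sets.countable_UN''[of UNIV]) auto
  have gen: "AE x in lborel. x \<notin> S \<longrightarrow> w x = 0"
    if Lw: "L2 w" and Lq: "\<And>n. L2 (q n)" and cq: "(\<lambda>n. N2 (\<lambda>x. q n x - w x)) \<longlonglongrightarrow> 0"
      and qz: "\<And>n x. x \<notin> S \<Longrightarrow> q n x = 0"
    for w :: "'a \<Rightarrow> 'b::euclidean_space" and q
  proof -
    define v where "v x = indicator (-S) x *\<^sub>R w x" for x
    have [measurable]: "w \<in> borel_measurable borel" using Lw by (simp add: L2_def)
    have [measurable]: "-S \<in> sets borel" using Sm by auto
    have vm[measurable]: "v \<in> borel_measurable borel" unfolding v_def by measurable
    have m2: "(\<lambda>x. (norm (v x))\<^sup>2) \<in> borel_measurable lborel" by measurable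
    have Lv: "L2 v" unfolding L2_def
    proof
      show "v \<in> borel_measurable lborel" using vm by simp
      show "integrable lborel (\<lambda>x. (norm (v x))\<^sup>2)"
        by (rule Bochner_Integration.integrable_bound[OF L2_int[OF Lw] m2], rule AE_I2)
          (auto simp: v_def indicator_def)
    qed
    have le: "N2 v \<le> N2 (\<lambda>x. q n x - w x)" for n
      unfolding N2_def
    proof (rule integral_mono)
      show "integrable lborel (\<lambda>x. (norm (v x))\<^sup>2)" using Lv by (simp add: L2_def)
      show "integrable lborel (\<lambda>x. (norm (q n x - w x))\<^sup>2)" using L2_diff[OF Lq Lw] by (simp add: L2_def)
      fix x show "(norm (v x))\<^sup>2 \<le> (norm (q n x - w x))\<^sup>2"
        by (cases "x \<in> S") (auto simp: v_def qz)
    qed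
    have "N2 v \<le> 0" by (rule LIMSEQ_le_const[OF cq]) (use le in auto)
    then have "N2 v = 0" using N2_nonneg[of v] by simp
    from N2_zero_AE[OF Lv this] show ?thesis
      by eventually_elim (auto simp: v_def)
  qed
  have "AE x in lborel. x \<notin> S \<longrightarrow> u x = 0"
    by (rule gen[OF Lu Lp(1) c1]) (use outside_supp(1) in \<open>auto simp: S_def\<close>)
  then show "AE x in lborel. x \<notin> U \<longrightarrow> u x = 0" using SU by (auto elim!: AE_mp)
  have "AE x in lborel. x \<notin> S \<longrightarrow> g x = 0"
    by (rule gen[OF Lg Lp(2) c2]) (use test_cgrad_zero in \<open>auto simp: S_def\<close>)
  then show "AE x in lborel. x \<notin> U \<longrightarrow> g x = 0" using SU by (auto elim!: AE_mp)
qed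

lemma wgrad_ae:
  fixes u :: "'a::euclidean_space \<Rightarrow> real"
  assumes "H10_grad U u g"
  shows "AE x in lborel. wgrad u x = g x" "H10_grad UNIV u (wgrad u)"
proof -
  obtain \<phi> where A: "approx U u g \<phi>" using H10_grad_approx[OF assms] by blast
  have "H10_grad UNIV u g" using approx_H10[OF approx_mono[OF A]] by simp
  then show W: "H10_grad UNIV u (wgrad u)" unfolding wgrad_def using someI[of "H10_grad UNIV u"] by blast
  obtain \<psi> where B: "approx UNIV u (wgrad u) \<psi>" using H10_grad_approx[OF W] by blast
  show "AE x in lborel. wgrad u x = g x" by (rule grad_unique[OF B A])
qed

lemma H10_grad_lin:
  fixes u v :: "'a::euclidean_space \<Rightarrow> real"
  assumes "H10_grad U u g" "H10_grad U v h"
  shows "H10_grad U (\<lambda>x. a * u x + b * v x) (\<lambda>x. a *\<^sub>R g x + b *\<^sub>R h x)"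
proof -
  obtain \<phi> where A: "approx U u g \<phi>" using H10_grad_approx[OF assms(1)] by blast
  obtain \<psi> where B: "approx U v h \<psi>" using H10_grad_approx[OF assms(2)] by blast
  show ?thesis by (rule approx_H10[OF approx_lin[OF A B]])
qed

lemma H10_grad_L2:
  fixes u :: "'a::euclidean_space \<Rightarrow> real"
  assumes "H10_grad U u g"
  shows "L2 u" "L2 g" "AE x in lborel. x \<notin> U \<longrightarrow> u x = 0" "AE x in lborel. x \<notin> U \<longrightarrow> g x = 0"
proof -
  obtain \<phi> where A: "approx U u g \<phi>" using H10_grad_approx[OF assms(1)] by blast
  then show "L2 u" "L2 g" unfolding approx_def by auto
  show "AE x in lborel. x \<notin> U \<longrightarrow> u x = 0" "AE x in lborel. x \<notin> U \<longrightarrow> g x = 0"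
    using approx_vanish[OF A] by auto
qed

lemma fatou_bound:
  fixes u :: "nat \<Rightarrow> 'a \<Rightarrow> ennreal"
  assumes m: "\<And>k. u k \<in> borel_measurable M"
    and lim: "AE x in M. (\<lambda>k. u k x) \<longlonglongrightarrow> v x"
    and b: "\<forall>\<^sub>F k in sequentially. integral\<^sup>N M (u k) \<le> C"
  shows "integral\<^sup>N M v \<le> C"
proof -
  have "integral\<^sup>N M v = (\<integral>\<^sup>+ x. liminf (\<lambda>k. u k x) \<partial>M)"
  proof (rule nn_integral_cong_AE)
    show "AE x in M. v x = liminf (\<lambda>k. u k x)"
      using lim
    proof eventually_elim
      case (elim x)
      show ?case by (rule lim_imp_Liminf[symmetric]) (use elim in auto)
    qed
  qed
  also have "\<dots> \<le> liminf (\<lambda>k. integral\<^sup>N M (u k))" by (rule nn_integral_liminf[OF m])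
  also have "\<dots> \<le> limsup (\<lambda>k. integral\<^sup>N M (u k))" by (rule Liminf_le_Limsup) simp
  also have "\<dots> \<le> C" by (rule Limsup_bounded[OF b])
  finally show ?thesis .
qed

lemma norm_sq_bound: "0 \<le> a \<Longrightarrow> (a::real) \<le> (1/2)^k + 2^k * a\<^sup>2"
proof (cases "a \<le> (1/2)^k")
  case True then show ?thesis by (simp add: add_increasing2)
next
  case False
  assume a0: "0 \<le> a"
  have "1 < 2^k * a"
  proof -
    have "(1/2::real)^k * 2^k = 1" by (simp add: power_mult_distrib[symmetric])
    then have "1 = (1/2::real)^k * 2^k" by simp
    also have "\<dots> < a * 2^k" using False by (intro mult_strict_right_mono) auto
    finally show ?thesis by (simp add: mult.commute)
  qed
  then have "a * 1 \<le> a * (2^k * a)" using a0 by (intro mult_left_mono) auto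
  then have "a \<le> 2^k * a\<^sup>2" by (simp add: power2_eq_square algebra_simps)
  then show ?thesis by (simp add: add_increasing)
qed

lemma L2_complete:
  fixes f :: "nat \<Rightarrow> 'a::euclidean_space \<Rightarrow> 'b::euclidean_space"
  assumes Lf: "\<And>n. L2 (f n)"
    and C: "\<And>e. e > 0 \<Longrightarrow> \<exists>N. \<forall>n\<ge>N. \<forall>m\<ge>N. N2 (\<lambda>x. f n x - f m x) < e"
  shows "\<exists>F. L2 F \<and> (\<lambda>n. N2 (\<lambda>x. f n x - F x)) \<longlonglongrightarrow> 0"
proof -
  have fm[measurable]: "f n \<in> borel_measurable borel" for n using Lf[of n] by (simp add: L2_def)
  have "\<forall>k. \<exists>N. \<forall>n\<ge>N. \<forall>m\<ge>N. N2 (\<lambda>x. f n x - f m x) < (1/8)^k"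
    using C by simp
  then obtain Nf where Nf: "\<And>k n m. n \<ge> Nf k \<Longrightarrow> m \<ge> Nf k \<Longrightarrow> N2 (\<lambda>x. f n x - f m x) < (1/8)^k"
    by metis
  define s where "s k = k + (\<Sum>j\<le>k. Nf j)" for k
  have sN: "Nf k \<le> s k" for k
    unfolding s_def using member_le_sum[of k "{..k}" Nf] by simp
  have smono: "s k \<le> s (Suc k)" for k unfolding s_def by simp
  have sk: "k \<le> s k" for k unfolding s_def by simp
  define d where "d k x = f (s (Suc k)) x - f (s k) x" for k x
  have dm[measurable]: "d k \<in> borel_measurable borel" for k unfolding d_def by measurable
  have Ld: "L2 (d k)" for k unfolding d_def by (rule L2_diff[OF Lf Lf])
  have Nd: "N2 (d k) < (1/8)^k" for k
    unfolding d_def by (rule Nf) (use sN smono le_trans in blast)+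
  define T where "T x = (\<Sum>k. ennreal (2^k * (norm (d k x))\<^sup>2))" for x
  have Tm[measurable]: "T \<in> borel_measurable borel" unfolding T_def by measurable
  have "(\<integral>\<^sup>+x. T x \<partial>lborel) = (\<Sum>k. \<integral>\<^sup>+x. ennreal (2^k * (norm (d k x))\<^sup>2) \<partial>lborel)"
    unfolding T_def by (rule nn_integral_suminf) measurable
  also have "\<dots> = (\<Sum>k. ennreal (2^k * N2 (d k)))"
  proof (rule suminf_cong)
    fix k
    have "(\<integral>\<^sup>+x. ennreal (2^k * (norm (d k x))\<^sup>2) \<partial>lborel) = (\<integral>\<^sup>+x. ennreal (2^k) * ennreal ((norm (d k x))\<^sup>2) \<partial>lborel)"
      by (simp add: ennreal_mult)
    also have "\<dots> = ennreal (2^k) * (\<integral>\<^sup>+x. ennreal ((norm (d k x))\<^sup>2) \<partial>lborel)"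
      by (rule nn_integral_cmult) measurable
    also have "\<dots> = ennreal (2^k * N2 (d k))" using nn_N2[OF Ld] by (simp add: ennreal_mult N2_nonneg)
    finally show "(\<integral>\<^sup>+x. ennreal (2^k * (norm (d k x))\<^sup>2) \<partial>lborel) = ennreal (2^k * N2 (d k))" .
  qed
  also have "\<dots> \<le> (\<Sum>k. ennreal ((1/4)^k))"
  proof (rule suminf_le)
    fix k
    have "2^k * N2 (d k) \<le> 2^k * (1/8)^k" using Nd[of k] by (intro mult_left_mono) auto
    also have "\<dots> = (1/4::real)^k" by (simp add: power_mult_distrib[symmetric])
    finally show "ennreal (2^k * N2 (d k)) \<le> ennreal ((1/4)^k)" by (rule ennreal_leI)
  qed auto
  also have "\<dots> = ennreal (\<Sum>k. (1/4::real)^k)"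
    by (rule suminf_ennreal2) (auto intro!: summable_geometric)
  finally have Tfin: "(\<integral>\<^sup>+x. T x \<partial>lborel) \<noteq> \<infinity>" by (auto simp: top_unique)
  have AET: "AE x in lborel. T x \<noteq> \<infinity>" by (rule nn_integral_PInf_AE[OF _ Tfin]) simp
  define G where "G = {x. T x \<noteq> \<infinity>}"
  have Gm[measurable]: "G \<in> sets borel" unfolding G_def by measurable
  have sumd: "summable (\<lambda>k. d k x)" if "x \<in> G" for x
  proof -
    have "summable (\<lambda>k. 2^k * (norm (d k x))\<^sup>2)"
      by (rule summable_suminf_not_top) (use that in \<open>auto simp: G_def T_def\<close>)
    then have "summable (\<lambda>k. (1/2::real)^k + 2^k * (norm (d k x))\<^sup>2)"
      by (intro summable_add summable_geometric) auto
    then have "summable (\<lambda>k. norm (d k x))"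
      by (rule summable_comparison_test'[where N=0]) (auto intro!: norm_sq_bound)
    then show ?thesis by (rule summable_norm_cancel)
  qed
  define F where "F x = indicator G x *\<^sub>R (f (s 0) x + (\<Sum>j. d j x))" for x
  have Fm[measurable]: "F \<in> borel_measurable borel" unfolding F_def by measurable
  have conv: "(\<lambda>k. f (s k) x) \<longlonglongrightarrow> F x" if "x \<in> G" for x
  proof -
    have tel: "f (s k) x = f (s 0) x + (\<Sum>j<k. d j x)" for k
      unfolding d_def using sum_lessThan_telescope[of "\<lambda>j. f (s j) x" k] by simp
    have "(\<lambda>k. \<Sum>j<k. d j x) \<longlonglongrightarrow> (\<Sum>j. d j x)" by (rule summable_LIMSEQ[OF sumd[OF that]])
    then have "(\<lambda>k. f (s 0) x + (\<Sum>j<k. d j x)) \<longlonglongrightarrow> f (s 0) x + (\<Sum>j. d j x)"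
      by (intro tendsto_intros)
    moreover have "(\<lambda>k. f (s k) x) = (\<lambda>k. f (s 0) x + (\<Sum>j<k. d j x))" using tel by (rule ext)
    moreover have "F x = f (s 0) x + (\<Sum>j. d j x)" using that by (simp add: F_def)
    ultimately show ?thesis by simp
  qed
  have AEG: "AE x in lborel. x \<in> G" using AET by (simp add: G_def)
  have key: "\<exists>N. \<forall>n\<ge>N. L2 (\<lambda>x. f n x - F x) \<and> N2 (\<lambda>x. f n x - F x) \<le> e" if e: "e > 0" for e
  proof -
    obtain N where N: "\<And>n m. n \<ge> N \<Longrightarrow> m \<ge> N \<Longrightarrow> N2 (\<lambda>x. f n x - f m x) < e" using C[OF e] by blast
    have "L2 (\<lambda>x. f n x - F x) \<and> N2 (\<lambda>x. f n x - F x) \<le> e" if n: "n \<ge> N" for n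
    proof -
      have "(\<integral>\<^sup>+x. ennreal ((norm (f n x - F x))\<^sup>2) \<partial>lborel) \<le> ennreal e"
      proof (rule fatou_bound[where u="\<lambda>k x. ennreal ((norm (f n x - f (s k) x))\<^sup>2)"])
        show "(\<lambda>x. ennreal ((norm (f n x - f (s k) x))\<^sup>2)) \<in> borel_measurable lborel" for k by measurable
        show "AE x in lborel. (\<lambda>k. ennreal ((norm (f n x - f (s k) x))\<^sup>2)) \<longlonglongrightarrow> ennreal ((norm (f n x - F x))\<^sup>2)"
          using AEG by eventually_elim (intro tendsto_intros conv)
        show "\<forall>\<^sub>F k in sequentially. (\<integral>\<^sup>+x. ennreal ((norm (f n x - f (s k) x))\<^sup>2) \<partial>lborel) \<le> ennreal e"
          unfolding eventually_sequentially
        proof (intro exI allI impI)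
          fix k assume "N \<le> k"
          then have "N \<le> s k" using sk le_trans by blast
          then have "N2 (\<lambda>x. f n x - f (s k) x) < e" using N n by blast
          then show "(\<integral>\<^sup>+x. ennreal ((norm (f n x - f (s k) x))\<^sup>2) \<partial>lborel) \<le> ennreal e"
            using nn_N2[OF L2_diff[OF Lf Lf], of n "s k"] by (simp add: ennreal_leI)
        qed
      qed
      moreover have mm: "(\<lambda>x. f n x - F x) \<in> borel_measurable lborel" by measurable
      ultimately have L: "L2 (\<lambda>x. f n x - F x)"
        by (intro nn_L2) (auto simp: top_unique intro: le_less_trans)
      moreover have "N2 (\<lambda>x. f n x - F x) \<le> e"
        using \<open>(\<integral>\<^sup>+x. ennreal ((norm (f n x - F x))\<^sup>2) \<partial>lborel) \<le> ennreal e\<close> nn_N2[OF L] e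
        by (simp add: ennreal_le_iff N2_nonneg)
      ultimately show ?thesis by blast
    qed
    then show ?thesis by blast
  qed
  obtain N1 where "\<forall>n\<ge>N1. L2 (\<lambda>x. f n x - F x)" using key[of 1] by auto
  then have "L2 (\<lambda>x. f N1 x - (f N1 x - F x))" using L2_diff[OF Lf] by blast
  then have LF: "L2 F" by simp
  have "(\<lambda>n. N2 (\<lambda>x. f n x - F x)) \<longlonglongrightarrow> 0"
  proof (rule LIMSEQ_I)
    fix r :: real assume r: "0 < r"
    obtain N where "\<forall>n\<ge>N. L2 (\<lambda>x. f n x - F x) \<and> N2 (\<lambda>x. f n x - F x) \<le> r/2"
      using key[of "r/2"] r by auto
    then show "\<exists>no. \<forall>n\<ge>no. norm (N2 (\<lambda>x. f n x - F x) - 0) < r"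
      using r by (auto simp: N2_nonneg intro!: exI[of _ N])
  qed
  then show ?thesis using LF by blast
qed

lemma set_int_AE:
  fixes f F :: "'a::euclidean_space \<Rightarrow> real"
  assumes A: "A \<in> sets borel" and z: "AE x in lborel. x \<notin> A \<longrightarrow> F x = 0"
    and e: "AE x in lborel. f x = F x"
    and fm: "f \<in> borel_measurable borel" and Fm: "F \<in> borel_measurable borel"
  shows "(LINT x:A|lborel. f x) = (\<integral>x. F x \<partial>lborel)"
  unfolding set_lebesgue_integral_def
proof (rule integral_cong_AE)
  show "(\<lambda>x. indicator A x *\<^sub>R f x) \<in> borel_measurable lborel" using A fm by simp
  show "F \<in> borel_measurable lborel" using Fm by simp
  show "AE x in lborel. indicator A x *\<^sub>R f x = F x"
    using z e by eventually_elim (auto simp: indicator_def)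
qed

lemma energy_eq:
  fixes f :: "'a::euclidean_space \<Rightarrow> real"
  assumes H: "H10_grad U f g" and U: "U \<in> sets borel"
  shows "(LINT x:U|lborel. (norm (wgrad f x))\<^sup>2) = N2 g"
proof -
  have W: "H10_grad UNIV f (wgrad f)" using wgrad_ae(2)[OF H] .
  have [measurable]: "wgrad f \<in> borel_measurable borel" "g \<in> borel_measurable borel"
    using H10_grad_L2(2)[OF W] H10_grad_L2(2)[OF H] by (simp_all add: L2_def)
  show ?thesis unfolding N2_def
  proof (rule set_int_AE[OF U])
    show "AE x in lborel. x \<notin> U \<longrightarrow> (norm (g x))\<^sup>2 = 0"
      using H10_grad_L2(4)[OF H] by eventually_elim auto
    show "AE x in lborel. (norm (wgrad f x))\<^sup>2 = (norm (g x))\<^sup>2"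
      using wgrad_ae(1)[OF H] by eventually_elim auto
    show "(\<lambda>x. (norm (wgrad f x))\<^sup>2) \<in> borel_measurable borel" by measurable
    show "(\<lambda>x. (norm (g x))\<^sup>2) \<in> borel_measurable borel" by measurable
  qed
qed

lemma nds: fixes x y :: "'a::real_inner"
  shows "(norm (x - y))\<^sup>2 = x \<bullet> x - 2 * (x \<bullet> y) + y \<bullet> y"
  unfolding power2_norm_eq_inner by (simp add: inner_diff_left inner_diff_right inner_commute)

lemma parallelogram_pt:
  fixes a p q :: "'a::real_inner"
  shows "(norm (a - p))\<^sup>2 + (norm (a - q))\<^sup>2
     = 2 * (norm (a - ((1/2) *\<^sub>R p + (1/2) *\<^sub>R q)))\<^sup>2 + (1/2) * (norm (p - q))\<^sup>2"
  unfolding nds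
  by (simp add: inner_add_left inner_add_right inner_commute[of p q] inner_commute[of q a] inner_commute[of p a] field_simps)

lemma N2_int_eq_split:
  fixes a p :: "'a::euclidean_space \<Rightarrow> 'a"
  assumes "L2 a" "L2 p"
  shows "integrable lborel (\<lambda>x. (norm (a x - p x))\<^sup>2)"
  using L2_diff[OF assms] by (simp add: L2_def)

lemma exists_min:
  fixes u :: "'a::euclidean_space \<Rightarrow> real" and \<Omega> S :: "'a set"
  assumes Hu: "H10_grad \<Omega> u gu" and bd: "bounded \<Omega>" and SO: "S \<subseteq> \<Omega>"
    and Om: "\<Omega> \<in> sets borel"
  shows "\<exists>f. f \<in> H10 \<Omega> \<and> (\<lambda>x. f x - u x) \<in> H10 S \<and>
      (\<forall>h. h \<in> H10 \<Omega> \<and> (\<lambda>x. h x - u x) \<in> H10 S \<longrightarrow>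
         (LINT x:\<Omega>|lborel. (norm (wgrad f x))\<^sup>2) \<le> (LINT x:\<Omega>|lborel. (norm (wgrad h x))\<^sup>2))"
proof -
  obtain \<phi> where Au: "approx \<Omega> u gu \<phi>" using H10_grad_approx[OF Hu] by blast
  have Lgu: "L2 gu" using Au by (simp add: approx_def)
  define E where "E \<psi> = N2 (\<lambda>x. gu x - cgrad \<psi> x)" for \<psi> :: "'a \<Rightarrow> real"
  define D where "D = {\<psi>. test_fun S \<psi>}"
  define m where "m = Inf (E ` D)"
  have D0: "(\<lambda>x. 0) \<in> D" unfolding D_def by (simp add: test_fun_zero)
  have bdd: "bdd_below (E ` D)" unfolding bdd_below_def E_def using N2_nonneg by blast
  have mle: "m \<le> E \<psi>" if "\<psi> \<in> D" for \<psi> unfolding m_def using that bdd by (simp add: cInf_lower)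
  have "\<forall>n. \<exists>\<psi>\<in>D. E \<psi> < m + inverse (real (Suc n))"
  proof
    fix n
    have "Inf (E ` D) < m + inverse (real (Suc n))" unfolding m_def by simp
    then show "\<exists>\<psi>\<in>D. E \<psi> < m + inverse (real (Suc n))"
      using cInf_lessD[of "E ` D"] D0 by blast
  qed
  then obtain \<psi> where \<psi>D: "\<And>n. \<psi> n \<in> D" and \<psi>E: "\<And>n. E (\<psi> n) < m + inverse (real (Suc n))"
    by metis
  have t\<psi>: "test_fun S (\<psi> n)" for n using \<psi>D unfolding D_def by blast
  have L\<psi>: "L2 (\<psi> n)" "L2 (cgrad (\<psi> n))" for n using test_L2 t\<psi> by blast+
  have gradC: "N2 (\<lambda>x. cgrad (\<psi> n) x - cgrad (\<psi> k) x) < 2 * inverse (real (Suc n)) + 2 * inverse (real (Suc k))"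
    for n k
  proof -
    define mid where "mid x = (1/2) * \<psi> n x + (1/2) * \<psi> k x" for x
    have tm: "test_fun S mid" unfolding mid_def[abs_def] by (rule test_fun_lin[OF t\<psi> t\<psi>])
    have cm: "cgrad mid x = (1/2) *\<^sub>R cgrad (\<psi> n) x + (1/2) *\<^sub>R cgrad (\<psi> k) x" for x
      unfolding mid_def[abs_def] by (rule test_cgrad_lin[OF t\<psi> t\<psi>])
    have Lm: "L2 (cgrad mid)" using test_L2(2)[OF tm] .
    have pt: "(norm (gu x - cgrad (\<psi> n) x))\<^sup>2 + (norm (gu x - cgrad (\<psi> k) x))\<^sup>2
       = 2 * (norm (gu x - cgrad mid x))\<^sup>2 + (1/2) * (norm (cgrad (\<psi> n) x - cgrad (\<psi> k) x))\<^sup>2" for x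
      unfolding cm by (rule parallelogram_pt)
    have i1: "integrable lborel (\<lambda>x. (norm (gu x - cgrad (\<psi> n) x))\<^sup>2)" by (rule N2_int_eq_split[OF Lgu L\<psi>(2)])
    have i2: "integrable lborel (\<lambda>x. (norm (gu x - cgrad (\<psi> k) x))\<^sup>2)" by (rule N2_int_eq_split[OF Lgu L\<psi>(2)])
    have i3: "integrable lborel (\<lambda>x. (norm (gu x - cgrad mid x))\<^sup>2)" by (rule N2_int_eq_split[OF Lgu Lm])
    have i4: "integrable lborel (\<lambda>x. (norm (cgrad (\<psi> n) x - cgrad (\<psi> k) x))\<^sup>2)" by (rule N2_int_eq_split[OF L\<psi>(2) L\<psi>(2)])
    have "E (\<psi> n) + E (\<psi> k) = (\<integral>x. (norm (gu x - cgrad (\<psi> n) x))\<^sup>2 + (norm (gu x - cgrad (\<psi> k) x))\<^sup>2 \<partial>lborel)"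
      unfolding E_def N2_def by (rule Bochner_Integration.integral_add[OF i1 i2, symmetric])
    also have "\<dots> = (\<integral>x. 2 * (norm (gu x - cgrad mid x))\<^sup>2 + (1/2) * (norm (cgrad (\<psi> n) x - cgrad (\<psi> k) x))\<^sup>2 \<partial>lborel)"
      unfolding pt ..
    also have "\<dots> = 2 * E mid + (1/2) * N2 (\<lambda>x. cgrad (\<psi> n) x - cgrad (\<psi> k) x)"
      unfolding E_def N2_def using i3 i4 by simp
    finally have eq: "E (\<psi> n) + E (\<psi> k) = 2 * E mid + (1/2) * N2 (\<lambda>x. cgrad (\<psi> n) x - cgrad (\<psi> k) x)" .
    have "m \<le> E mid" using mle tm unfolding D_def by blast
    then show ?thesis using eq \<psi>E[of n] \<psi>E[of k] by linarith
  qed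
  have gradCauchy: "\<exists>N. \<forall>n\<ge>N. \<forall>k\<ge>N. N2 (\<lambda>x. cgrad (\<psi> n) x - cgrad (\<psi> k) x) < e" if e: "e > 0" for e
  proof -
    obtain N where N: "inverse (real (Suc N)) < e / 4" using reals_Archimedean[of "e/4"] e by auto
    have "N2 (\<lambda>x. cgrad (\<psi> n) x - cgrad (\<psi> k) x) < e" if "n \<ge> N" "k \<ge> N" for n k
    proof -
      have "inverse (real (Suc n)) \<le> inverse (real (Suc N))" "inverse (real (Suc k)) \<le> inverse (real (Suc N))"
        using that by (auto intro!: le_imp_inverse_le)
      then show ?thesis using gradC[of n k] N by linarith
    qed
    then show ?thesis by blast
  qed
  obtain b where b: "0 < b" "\<forall>x\<in>\<Omega>. norm x \<le> b" using bd unfolding bounded_pos by blast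
  obtain R where R: "0 \<le> R" "\<Omega> \<subseteq> cball 0 R"
  proof
    show "0 \<le> b" using b by simp
    show "\<Omega> \<subseteq> cball 0 b" using b by (auto simp: dist_norm)
  qed
  have pos4: "0 < 4 * R\<^sup>2 + 1" by (intro add_nonneg_pos) auto
  obtain e0 :: 'a where e0: "e0 \<in> Basis" using nonempty_Basis by blast
  have funCauchy: "\<exists>N. \<forall>n\<ge>N. \<forall>k\<ge>N. N2 (\<lambda>x. \<psi> n x - \<psi> k x) < e" if e: "e > 0" for e
  proof -
    obtain N where N: "\<And>n k. n \<ge> N \<Longrightarrow> k \<ge> N \<Longrightarrow> N2 (\<lambda>x. cgrad (\<psi> n) x - cgrad (\<psi> k) x) < e / (4 * R\<^sup>2 + 1)"
    proof -
      have "0 < e / (4 * R\<^sup>2 + 1)" using e pos4 by (intro divide_pos_pos)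
      from gradCauchy[OF this] obtain N where "\<forall>n\<ge>N. \<forall>k\<ge>N. N2 (\<lambda>x. cgrad (\<psi> n) x - cgrad (\<psi> k) x) < e / (4 * R\<^sup>2 + 1)"
        by blast
      then show ?thesis using that by blast
    qed
    have "N2 (\<lambda>x. \<psi> n x - \<psi> k x) < e" if "n \<ge> N" "k \<ge> N" for n k
    proof -
      have td: "test_fun S (\<lambda>x. 1 * \<psi> n x + (-1) * \<psi> k x)" by (rule test_fun_lin[OF t\<psi> t\<psi>])
      have cd: "cgrad (\<lambda>x. 1 * \<psi> n x + (-1) * \<psi> k x) x = cgrad (\<psi> n) x - cgrad (\<psi> k) x" for x
        using test_cgrad_lin[OF t\<psi> t\<psi>, of 1 n "-1" k x] by simp
      have "N2 (\<lambda>x. 1 * \<psi> n x + (-1) * \<psi> k x) \<le> 4 * R\<^sup>2 * N2 (cgrad (\<lambda>x. 1 * \<psi> n x + (-1) * \<psi> k x))"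
        by (rule poincare[OF td _ R(1) e0]) (use SO R(2) in blast)
      then have P: "N2 (\<lambda>x. \<psi> n x - \<psi> k x) \<le> 4 * R\<^sup>2 * N2 (\<lambda>x. cgrad (\<psi> n) x - cgrad (\<psi> k) x)"
        unfolding cd by simp
      define X where "X = N2 (\<lambda>x. cgrad (\<psi> n) x - cgrad (\<psi> k) x)"
      have X0: "0 \<le> X" unfolding X_def by (rule N2_nonneg)
      have XN: "X * (4 * R\<^sup>2 + 1) < e" using N[OF that] unfolding X_def[symmetric]
        using pos4 by (simp add: pos_less_divide_eq)
      have "4 * R\<^sup>2 * X \<le> X * (4 * R\<^sup>2 + 1)" using X0 by (simp add: algebra_simps)
      then show ?thesis using P XN unfolding X_def[symmetric] by linarith
    qed
    then show ?thesis by blast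
  qed
  obtain W where LW: "L2 W" and cW: "(\<lambda>n. N2 (\<lambda>x. \<psi> n x - W x)) \<longlonglongrightarrow> 0"
    using L2_complete[OF L\<psi>(1) funCauchy] by blast
  obtain G where LG: "L2 G" and cG: "(\<lambda>n. N2 (\<lambda>x. cgrad (\<psi> n) x - G x)) \<longlonglongrightarrow> 0"
    using L2_complete[OF L\<psi>(2) gradCauchy] by blast
  have AW: "approx S W G \<psi>" unfolding approx_def using t\<psi> LW LG cW cG by blast
  define f where "f x = u x - W x" for x
  have Af: "approx \<Omega> (\<lambda>x. 1 * u x + (-1) * W x) (\<lambda>x. 1 *\<^sub>R gu x + (-1) *\<^sub>R G x) (\<lambda>n x. 1 * \<phi> n x + (-1) * \<psi> n x)"
    by (rule approx_lin[OF Au approx_mono[OF AW SO]])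
  have Hf: "H10_grad \<Omega> f (\<lambda>x. gu x - G x)"
    using approx_H10[OF Af] by (simp add: f_def[abs_def])
  have fH: "f \<in> H10 \<Omega>" using Hf unfolding H10_def by blast
  have Afu: "approx S (\<lambda>x. (-1) * W x + 0 * W x) (\<lambda>x. (-1) *\<^sub>R G x + 0 *\<^sub>R G x) (\<lambda>n x. (-1) * \<psi> n x + 0 * \<psi> n x)"
    by (rule approx_lin[OF AW AW])
  have "(\<lambda>x. f x - u x) = (\<lambda>x. (-1) * W x + 0 * W x)" by (auto simp: f_def)
  then have fuH: "(\<lambda>x. f x - u x) \<in> H10 S" using approx_H10[OF Afu] unfolding H10_def by auto
  have enf: "(LINT x:\<Omega>|lborel. (norm (wgrad f x))\<^sup>2) = N2 (\<lambda>x. gu x - G x)"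
    by (rule energy_eq[OF Hf Om])
  have LgG: "L2 (\<lambda>x. gu x - G x)" using L2_diff[OF Lgu LG] .
  have Lgp: "L2 (\<lambda>x. gu x - cgrad (\<psi> n) x)" for n using L2_diff[OF Lgu L\<psi>(2)] .
  have conv1: "(\<lambda>n. N2 (\<lambda>x. (gu x - cgrad (\<psi> n) x) - (gu x - G x))) \<longlonglongrightarrow> 0"
  proof -
    have "N2 (\<lambda>x. (gu x - cgrad (\<psi> n) x) - (gu x - G x)) = N2 (\<lambda>x. cgrad (\<psi> n) x - G x)" for n
      unfolding N2_def by (simp add: norm_minus_commute)
    then show ?thesis using cG by simp
  qed
  have "(\<lambda>n. \<integral>x. (gu x - cgrad (\<psi> n) x) \<bullet> (gu x - cgrad (\<psi> n) x) \<partial>lborel)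
      \<longlonglongrightarrow> (\<integral>x. (gu x - G x) \<bullet> (gu x - G x) \<partial>lborel)"
    by (rule lim_inner[OF Lgp LgG Lgp LgG conv1 conv1])
  then have limE: "(\<lambda>n. E (\<psi> n)) \<longlonglongrightarrow> N2 (\<lambda>x. gu x - G x)"
    unfolding E_def N2_self_inner .
  have limE2: "(\<lambda>n. E (\<psi> n)) \<longlonglongrightarrow> m"
  proof (rule tendsto_sandwich[of "\<lambda>n. m" _ _ "\<lambda>n. m + inverse (real (Suc n))"])
    show "\<forall>\<^sub>F n in sequentially. m \<le> E (\<psi> n)" using mle \<psi>D by auto
    show "\<forall>\<^sub>F n in sequentially. E (\<psi> n) \<le> m + inverse (real (Suc n))"
      using \<psi>E by (intro always_eventually allI less_imp_le)
    have "(\<lambda>n. m + inverse (real (Suc n))) \<longlonglongrightarrow> m + 0"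
      by (intro tendsto_intros LIMSEQ_inverse_real_of_nat)
    then show "(\<lambda>n. m + inverse (real (Suc n))) \<longlonglongrightarrow> m" by simp
  qed simp
  have fm: "(LINT x:\<Omega>|lborel. (norm (wgrad f x))\<^sup>2) = m"
    using LIMSEQ_unique[OF limE limE2] enf by simp
  have minimal: "(LINT x:\<Omega>|lborel. (norm (wgrad f x))\<^sup>2) \<le> (LINT x:\<Omega>|lborel. (norm (wgrad h x))\<^sup>2)"
    if h: "h \<in> H10 \<Omega>" "(\<lambda>x. h x - u x) \<in> H10 S" for h
  proof -
    obtain gd where Hd: "H10_grad S (\<lambda>x. h x - u x) gd" using h(2) unfolding H10_def by blast
    obtain ch where Ach: "approx S (\<lambda>x. h x - u x) gd ch" using H10_grad_approx[OF Hd] by blast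
    have Hd': "H10_grad \<Omega> (\<lambda>x. h x - u x) gd" using approx_H10[OF approx_mono[OF Ach SO]] .
    have "H10_grad \<Omega> (\<lambda>x. 1 * u x + 1 * (h x - u x)) (\<lambda>x. 1 *\<^sub>R gu x + 1 *\<^sub>R gd x)"
      by (rule H10_grad_lin[OF Hu Hd'])
    then have Hh: "H10_grad \<Omega> h (\<lambda>x. gu x + gd x)" by simp
    have enh: "(LINT x:\<Omega>|lborel. (norm (wgrad h x))\<^sup>2) = N2 (\<lambda>x. gu x + gd x)"
      by (rule energy_eq[OF Hh Om])
    have tch: "test_fun S (ch n)" "L2 (cgrad (ch n))" for n using Ach test_L2 unfolding approx_def by blast+
    have Lgd: "L2 gd" and cch: "(\<lambda>n. N2 (\<lambda>x. cgrad (ch n) x - gd x)) \<longlonglongrightarrow> 0"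
      using Ach unfolding approx_def by auto
    define ch' where "ch' n x = (-1) * ch n x + 0 * ch n x" for n x
    have tch': "test_fun S (ch' n)" for n unfolding ch'_def[abs_def] by (rule test_fun_lin[OF tch(1) tch(1)])
    have cch': "cgrad (ch' n) x = - cgrad (ch n) x" for n x
      unfolding ch'_def[abs_def] using test_cgrad_lin[OF tch(1) tch(1), of "-1" n 0 n x] by simp
    have Em: "m \<le> N2 (\<lambda>x. gu x + cgrad (ch n) x)" for n
      using mle[of "ch' n"] tch' unfolding D_def E_def cch' by simp
    have Lq: "L2 (\<lambda>x. gu x + cgrad (ch n) x)" for n using L2_add[OF Lgu tch(2)] .
    have Lq': "L2 (\<lambda>x. gu x + gd x)" using L2_add[OF Lgu Lgd] .
    have conv2: "(\<lambda>n. N2 (\<lambda>x. (gu x + cgrad (ch n) x) - (gu x + gd x))) \<longlonglongrightarrow> 0"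
      using cch by simp
    have "(\<lambda>n. \<integral>x. (gu x + cgrad (ch n) x) \<bullet> (gu x + cgrad (ch n) x) \<partial>lborel)
        \<longlonglongrightarrow> (\<integral>x. (gu x + gd x) \<bullet> (gu x + gd x) \<partial>lborel)"
      by (rule lim_inner[OF Lq Lq' Lq Lq' conv2 conv2])
    then have "(\<lambda>n. N2 (\<lambda>x. gu x + cgrad (ch n) x)) \<longlonglongrightarrow> N2 (\<lambda>x. gu x + gd x)"
      unfolding N2_self_inner .
    then have "m \<le> N2 (\<lambda>x. gu x + gd x)" by (rule LIMSEQ_le_const) (use Em in auto)
    then show ?thesis using fm enh by simp
  qed
  show ?thesis using fH fuH minimal by blast
qed

lemma Vfun_props:
  fixes u :: "'a::euclidean_space \<Rightarrow> real"
  assumes Hu: "H10_grad \<Omega> u gu" and bd: "bounded \<Omega>" and Om: "\<Omega> \<in> sets borel"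
  shows "Vfun \<Omega> K u \<in> H10 \<Omega>" "(\<lambda>x. Vfun \<Omega> K u x - u x) \<in> H10 (\<Omega> - K)"
proof -
  have "\<exists>f. f \<in> H10 \<Omega> \<and> (\<lambda>x. f x - u x) \<in> H10 (\<Omega> - K) \<and>
      (\<forall>h. h \<in> H10 \<Omega> \<and> (\<lambda>x. h x - u x) \<in> H10 (\<Omega> - K) \<longrightarrow>
         (LINT x:\<Omega>|lborel. (norm (wgrad f x))\<^sup>2) \<le> (LINT x:\<Omega>|lborel. (norm (wgrad h x))\<^sup>2))"
    by (rule exists_min[OF Hu bd _ Om]) blast
  from someI_ex[OF this] show "Vfun \<Omega> K u \<in> H10 \<Omega>" "(\<lambda>x. Vfun \<Omega> K u x - u x) \<in> H10 (\<Omega> - K)"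
    unfolding Vfun_def by blast+
qed

lemma int_expand:
  fixes a b c d :: "'a::euclidean_space \<Rightarrow> 'b::euclidean_space"
  assumes "L2 a" "L2 b" "L2 c" "L2 d"
  shows "(\<integral>x. (a x - b x) \<bullet> (c x - d x) \<partial>lborel)
    = (\<integral>x. a x \<bullet> c x \<partial>lborel) - (\<integral>x. a x \<bullet> d x \<partial>lborel) - (\<integral>x. b x \<bullet> c x \<partial>lborel) + (\<integral>x. b x \<bullet> d x \<partial>lborel)"
proof -
  have i: "integrable lborel (\<lambda>x. a x \<bullet> c x)" "integrable lborel (\<lambda>x. a x \<bullet> d x)"
    "integrable lborel (\<lambda>x. b x \<bullet> c x)" "integrable lborel (\<lambda>x. b x \<bullet> d x)"
    using assms by (auto intro: L2_inner_int)
  have "(\<lambda>x. (a x - b x) \<bullet> (c x - d x)) = (\<lambda>x. ((a x \<bullet> c x - a x \<bullet> d x) - b x \<bullet> c x) + b x \<bullet> d x)"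
    by (auto simp: inner_diff_left inner_diff_right)
  then have "(\<integral>x. (a x - b x) \<bullet> (c x - d x) \<partial>lborel) = (\<integral>x. ((a x \<bullet> c x - a x \<bullet> d x) - b x \<bullet> c x) + b x \<bullet> d x \<partial>lborel)"
    by simp
  also have "\<dots> = (\<integral>x. (a x \<bullet> c x - a x \<bullet> d x) - b x \<bullet> c x \<partial>lborel) + (\<integral>x. b x \<bullet> d x \<partial>lborel)"
    using i by (intro Bochner_Integration.integral_add) auto
  also have "(\<integral>x. (a x \<bullet> c x - a x \<bullet> d x) - b x \<bullet> c x \<partial>lborel) = (\<integral>x. a x \<bullet> c x - a x \<bullet> d x \<partial>lborel) - (\<integral>x. b x \<bullet> c x \<partial>lborel)"
    using i by (intro Bochner_Integration.integral_diff) auto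
  also have "(\<integral>x. a x \<bullet> c x - a x \<bullet> d x \<partial>lborel) = (\<integral>x. a x \<bullet> c x \<partial>lborel) - (\<integral>x. a x \<bullet> d x \<partial>lborel)"
    using i by (intro Bochner_Integration.integral_diff) auto
  finally show ?thesis .
qed

lemma eigen_eq:
  fixes u \<phi> :: "'a::euclidean_space \<Rightarrow> real"
  assumes u: "u \<in> eigenspace_D \<Omega> lam" and Hu: "H10_grad \<Omega> u gu" and Hp: "H10_grad \<Omega> \<phi> gp"
    and Om: "\<Omega> \<in> sets borel"
  shows "(\<integral>x. gu x \<bullet> gp x \<partial>lborel) = lam * (\<integral>x. u x * \<phi> x \<partial>lborel)"
proof -
  have "\<phi> \<in> H10 \<Omega>" using Hp unfolding H10_def by blast
  then have e: "(LINT x:\<Omega>|lborel. wgrad u x \<bullet> wgrad \<phi> x) = lam * (LINT x:\<Omega>|lborel. u x * \<phi> x)"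
    using u unfolding eigenspace_D_def by blast
  have [measurable]: "wgrad u \<in> borel_measurable borel" "wgrad \<phi> \<in> borel_measurable borel"
    "gu \<in> borel_measurable borel" "gp \<in> borel_measurable borel"
    "u \<in> borel_measurable borel" "\<phi> \<in> borel_measurable borel"
    using H10_grad_L2(2)[OF wgrad_ae(2)[OF Hu]] H10_grad_L2(2)[OF wgrad_ae(2)[OF Hp]]
      H10_grad_L2(1,2)[OF Hu] H10_grad_L2(1,2)[OF Hp] by (simp_all add: L2_def)
  have "(LINT x:\<Omega>|lborel. wgrad u x \<bullet> wgrad \<phi> x) = (\<integral>x. gu x \<bullet> gp x \<partial>lborel)"
  proof (rule set_int_AE[OF Om])
    show "AE x in lborel. x \<notin> \<Omega> \<longrightarrow> gu x \<bullet> gp x = 0"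
      using H10_grad_L2(4)[OF Hu] by eventually_elim auto
    show "AE x in lborel. wgrad u x \<bullet> wgrad \<phi> x = gu x \<bullet> gp x"
      using wgrad_ae(1)[OF Hu] wgrad_ae(1)[OF Hp] by eventually_elim auto
    show "(\<lambda>x. wgrad u x \<bullet> wgrad \<phi> x) \<in> borel_measurable borel" by measurable
    show "(\<lambda>x. gu x \<bullet> gp x) \<in> borel_measurable borel" by measurable
  qed
  moreover have "(LINT x:\<Omega>|lborel. u x * \<phi> x) = (\<integral>x. u x * \<phi> x \<partial>lborel)"
  proof (rule set_int_AE[OF Om])
    show "AE x in lborel. x \<notin> \<Omega> \<longrightarrow> u x * \<phi> x = 0"
      using H10_grad_L2(3)[OF Hu] by eventually_elim auto
    show "AE x in lborel. u x * \<phi> x = u x * \<phi> x" by simp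
    show "(\<lambda>x. u x * \<phi> x) \<in> borel_measurable borel" by measurable
    show "(\<lambda>x. u x * \<phi> x) \<in> borel_measurable borel" by measurable
  qed
  ultimately show ?thesis using e by simp
qed

lemma proj_facts:
  fixes u :: "'a::euclidean_space \<Rightarrow> real"
  assumes Hu: "H10_grad \<Omega> u gu" and bd: "bounded \<Omega>" and Om: "\<Omega> \<in> sets borel"
  shows "\<exists>gV. H10_grad \<Omega> (Vfun \<Omega> K u) gV \<and>
     (AE x in lborel. wgrad (Proj \<Omega> K u) x = gu x - gV x) \<and>
     (AE x in lborel. x \<notin> \<Omega> - K \<longrightarrow> gu x - gV x = 0) \<and>
     (AE x in lborel. x \<notin> \<Omega> - K \<longrightarrow> Proj \<Omega> K u x = 0)"
proof -
  obtain gV where HV: "H10_grad \<Omega> (Vfun \<Omega> K u) gV"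
    using Vfun_props(1)[OF Hu bd Om] unfolding H10_def by blast
  obtain gd where Hd: "H10_grad (\<Omega> - K) (\<lambda>x. Vfun \<Omega> K u x - u x) gd"
    using Vfun_props(2)[OF Hu bd Om] unfolding H10_def by blast
  have "H10_grad \<Omega> (\<lambda>x. 1 * u x + (-1) * Vfun \<Omega> K u x) (\<lambda>x. 1 *\<^sub>R gu x + (-1) *\<^sub>R gV x)"
    by (rule H10_grad_lin[OF Hu HV])
  then have H1: "H10_grad \<Omega> (Proj \<Omega> K u) (\<lambda>x. gu x - gV x)" by (simp add: Proj_def)
  have "H10_grad (\<Omega> - K) (\<lambda>x. (-1) * (Vfun \<Omega> K u x - u x) + 0 * (Vfun \<Omega> K u x - u x))
      (\<lambda>x. (-1) *\<^sub>R gd x + 0 *\<^sub>R gd x)"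
    by (rule H10_grad_lin[OF Hd Hd])
  then have H2: "H10_grad (\<Omega> - K) (Proj \<Omega> K u) (\<lambda>x. - gd x)" by (simp add: Proj_def)
  have a1: "AE x in lborel. wgrad (Proj \<Omega> K u) x = gu x - gV x" by (rule wgrad_ae(1)[OF H1])
  have a2: "AE x in lborel. wgrad (Proj \<Omega> K u) x = - gd x" by (rule wgrad_ae(1)[OF H2])
  have a3: "AE x in lborel. x \<notin> \<Omega> - K \<longrightarrow> - gd x = 0" by (rule H10_grad_L2(4)[OF H2])
  have a4: "AE x in lborel. x \<notin> \<Omega> - K \<longrightarrow> Proj \<Omega> K u x = 0" by (rule H10_grad_L2(3)[OF H2])
  have "AE x in lborel. x \<notin> \<Omega> - K \<longrightarrow> gu x - gV x = 0"
    using a1 a2 a3 by eventually_elim auto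
  then show ?thesis using HV a1 a4 by blast
qed

theorem lemma3p5:
  fixes \<Omega> K :: "'a::euclidean_space set" and lam :: real and u v :: "'a \<Rightarrow> real"
  assumes "DIM('a) \<ge> 2" and "bounded \<Omega>" and "open \<Omega>"
    and "compact K" and "K \<subseteq> \<Omega>"
    and "dirichlet_eigenvalue \<Omega> lam"
    and "u \<in> eigenspace_D \<Omega> lam" and "v \<in> eigenspace_D \<Omega> lam"
  shows "qform \<Omega> K lam (Proj \<Omega> K u) (Proj \<Omega> K v) = rform \<Omega> K lam u v"
proof -
  note bd = assms(2)
  have Om: "\<Omega> \<in> sets borel" using assms(3) by (simp add: borel_open)
  have Km: "K \<in> sets borel" using assms(4) by (simp add: borel_closed compact_imp_closed)
  have Sm: "\<Omega> - K \<in> sets borel" using Om Km by auto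
  obtain gu where Hu: "H10_grad \<Omega> u gu" using assms(7) unfolding eigenspace_D_def H10_def by blast
  obtain gv where Hv: "H10_grad \<Omega> v gv" using assms(8) unfolding eigenspace_D_def H10_def by blast
  obtain gV where HV: "H10_grad \<Omega> (Vfun \<Omega> K u) gV"
     and pu1: "AE x in lborel. wgrad (Proj \<Omega> K u) x = gu x - gV x"
     and pu2: "AE x in lborel. x \<notin> \<Omega> - K \<longrightarrow> gu x - gV x = 0"
     and pu3: "AE x in lborel. x \<notin> \<Omega> - K \<longrightarrow> Proj \<Omega> K u x = 0"
    using proj_facts[OF Hu bd Om, of K] by blast
  obtain gV' where HV': "H10_grad \<Omega> (Vfun \<Omega> K v) gV'"
     and pv1: "AE x in lborel. wgrad (Proj \<Omega> K v) x = gv x - gV' x"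
     and pv2: "AE x in lborel. x \<notin> \<Omega> - K \<longrightarrow> gv x - gV' x = 0"
     and pv3: "AE x in lborel. x \<notin> \<Omega> - K \<longrightarrow> Proj \<Omega> K v x = 0"
    using proj_facts[OF Hv bd Om, of K] by blast
  define V where "V = Vfun \<Omega> K u"
  define V' where "V' = Vfun \<Omega> K v"
  have L: "L2 u" "L2 gu" "L2 v" "L2 gv" "L2 V" "L2 gV" "L2 V'" "L2 gV'"
    using H10_grad_L2(1,2)[OF Hu] H10_grad_L2(1,2)[OF Hv] H10_grad_L2(1,2)[OF HV]
      H10_grad_L2(1,2)[OF HV'] by (simp_all add: V_def V'_def)
  have HPu: "H10_grad UNIV (Proj \<Omega> K u) (wgrad (Proj \<Omega> K u))"
  proof -
    have "H10_grad \<Omega> (\<lambda>x. 1 * u x + (-1) * V x) (\<lambda>x. 1 *\<^sub>R gu x + (-1) *\<^sub>R gV x)"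
      by (rule H10_grad_lin[OF Hu HV[folded V_def]])
    then have "H10_grad \<Omega> (Proj \<Omega> K u) (\<lambda>x. gu x - gV x)" by (simp add: Proj_def V_def)
    then show ?thesis by (rule wgrad_ae(2))
  qed
  have HPv: "H10_grad UNIV (Proj \<Omega> K v) (wgrad (Proj \<Omega> K v))"
  proof -
    have "H10_grad \<Omega> (\<lambda>x. 1 * v x + (-1) * V' x) (\<lambda>x. 1 *\<^sub>R gv x + (-1) *\<^sub>R gV' x)"
      by (rule H10_grad_lin[OF Hv HV'[folded V'_def]])
    then have "H10_grad \<Omega> (Proj \<Omega> K v) (\<lambda>x. gv x - gV' x)" by (simp add: Proj_def V'_def)
    then show ?thesis by (rule wgrad_ae(2))
  qed
  have [measurable]: "u \<in> borel_measurable borel" "gu \<in> borel_measurable borel"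
    "v \<in> borel_measurable borel" "gv \<in> borel_measurable borel"
    "V \<in> borel_measurable borel" "gV \<in> borel_measurable borel"
    "V' \<in> borel_measurable borel" "gV' \<in> borel_measurable borel"
    using L by (simp_all add: L2_def)
  have [measurable]: "wgrad (Proj \<Omega> K u) \<in> borel_measurable borel"
    "wgrad (Proj \<Omega> K v) \<in> borel_measurable borel"
    "wgrad V \<in> borel_measurable borel" "wgrad V' \<in> borel_measurable borel"
    using H10_grad_L2(2)[OF HPu] H10_grad_L2(2)[OF HPv]
      H10_grad_L2(2)[OF wgrad_ae(2)[OF HV]] H10_grad_L2(2)[OF wgrad_ae(2)[OF HV']]
    by (simp_all add: L2_def V_def V'_def)
  have [measurable]: "Proj \<Omega> K u \<in> borel_measurable borel" "Proj \<Omega> K v \<in> borel_measurable borel"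
    using H10_grad_L2(1)[OF HPu] H10_grad_L2(1)[OF HPv] by (simp_all add: L2_def)
  have q1: "(LINT x:(\<Omega> - K)|lborel. wgrad (Proj \<Omega> K u) x \<bullet> wgrad (Proj \<Omega> K v) x)
      = (\<integral>x. (gu x - gV x) \<bullet> (gv x - gV' x) \<partial>lborel)"
  proof (rule set_int_AE[OF Sm])
    show "AE x in lborel. x \<notin> \<Omega> - K \<longrightarrow> (gu x - gV x) \<bullet> (gv x - gV' x) = 0"
      using pu2 by eventually_elim auto
    show "AE x in lborel. wgrad (Proj \<Omega> K u) x \<bullet> wgrad (Proj \<Omega> K v) x = (gu x - gV x) \<bullet> (gv x - gV' x)"
      using pu1 pv1 by eventually_elim auto
    show "(\<lambda>x. wgrad (Proj \<Omega> K u) x \<bullet> wgrad (Proj \<Omega> K v) x) \<in> borel_measurable borel" by measurable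
    show "(\<lambda>x. (gu x - gV x) \<bullet> (gv x - gV' x)) \<in> borel_measurable borel" by measurable
  qed
  have q2: "(LINT x:(\<Omega> - K)|lborel. Proj \<Omega> K u x * Proj \<Omega> K v x)
      = (\<integral>x. (u x - V x) * (v x - V' x) \<partial>lborel)"
  proof (rule set_int_AE[OF Sm])
    show "AE x in lborel. x \<notin> \<Omega> - K \<longrightarrow> (u x - V x) * (v x - V' x) = 0"
      using pu3 by eventually_elim (auto simp: Proj_def V_def)
    show "AE x in lborel. Proj \<Omega> K u x * Proj \<Omega> K v x = (u x - V x) * (v x - V' x)"
      by (simp add: Proj_def V_def V'_def)
    show "(\<lambda>x. Proj \<Omega> K u x * Proj \<Omega> K v x) \<in> borel_measurable borel" by measurable
    show "(\<lambda>x. (u x - V x) * (v x - V' x)) \<in> borel_measurable borel" by measurable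
  qed
  have r1: "(LINT x:\<Omega>|lborel. wgrad V x \<bullet> wgrad V' x) = (\<integral>x. gV x \<bullet> gV' x \<partial>lborel)"
  proof (rule set_int_AE[OF Om])
    show "AE x in lborel. x \<notin> \<Omega> \<longrightarrow> gV x \<bullet> gV' x = 0"
      using H10_grad_L2(4)[OF HV] by eventually_elim auto
    show "AE x in lborel. wgrad V x \<bullet> wgrad V' x = gV x \<bullet> gV' x"
      using wgrad_ae(1)[OF HV] wgrad_ae(1)[OF HV'] unfolding V_def V'_def by eventually_elim auto
    show "(\<lambda>x. wgrad V x \<bullet> wgrad V' x) \<in> borel_measurable borel" by measurable
    show "(\<lambda>x. gV x \<bullet> gV' x) \<in> borel_measurable borel" by measurable
  qed
  have r2: "(LINT x:\<Omega>|lborel. V x * V' x) = (\<integral>x. V x * V' x \<partial>lborel)"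
  proof (rule set_int_AE[OF Om])
    show "AE x in lborel. x \<notin> \<Omega> \<longrightarrow> V x * V' x = 0"
      using H10_grad_L2(3)[OF HV] unfolding V_def by eventually_elim auto
    show "AE x in lborel. V x * V' x = V x * V' x" by simp
    show "(\<lambda>x. V x * V' x) \<in> borel_measurable borel" by measurable
    show "(\<lambda>x. V x * V' x) \<in> borel_measurable borel" by measurable
  qed
  have e1: "(\<integral>x. gu x \<bullet> gv x \<partial>lborel) = lam * (\<integral>x. u x * v x \<partial>lborel)"
    by (rule eigen_eq[OF assms(7) Hu Hv Om])
  have e2: "(\<integral>x. gu x \<bullet> gV' x \<partial>lborel) = lam * (\<integral>x. u x * V' x \<partial>lborel)"
    unfolding V'_def by (rule eigen_eq[OF assms(7) Hu HV' Om])
  have e3: "(\<integral>x. gv x \<bullet> gV x \<partial>lborel) = lam * (\<integral>x. v x * V x \<partial>lborel)"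
    unfolding V_def by (rule eigen_eq[OF assms(8) Hv HV Om])
  have x1: "(\<integral>x. (gu x - gV x) \<bullet> (gv x - gV' x) \<partial>lborel)
    = (\<integral>x. gu x \<bullet> gv x \<partial>lborel) - (\<integral>x. gu x \<bullet> gV' x \<partial>lborel) - (\<integral>x. gV x \<bullet> gv x \<partial>lborel) + (\<integral>x. gV x \<bullet> gV' x \<partial>lborel)"
    by (rule int_expand) (use L in auto)
  have x2: "(\<integral>x. (u x - V x) \<bullet> (v x - V' x) \<partial>lborel)
    = (\<integral>x. u x \<bullet> v x \<partial>lborel) - (\<integral>x. u x \<bullet> V' x \<partial>lborel) - (\<integral>x. V x \<bullet> v x \<partial>lborel) + (\<integral>x. V x \<bullet> V' x \<partial>lborel)"
    by (rule int_expand) (use L in auto)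
  have c1: "(\<integral>x. gV x \<bullet> gv x \<partial>lborel) = (\<integral>x. gv x \<bullet> gV x \<partial>lborel)" by (simp add: inner_commute)
  have c2: "(\<integral>x. V x * v x \<partial>lborel) = (\<integral>x. v x * V x \<partial>lborel)" by (simp add: mult.commute)
  have "qform \<Omega> K lam (Proj \<Omega> K u) (Proj \<Omega> K v)
     = (\<integral>x. (gu x - gV x) \<bullet> (gv x - gV' x) \<partial>lborel) - lam * (\<integral>x. (u x - V x) * (v x - V' x) \<partial>lborel)"
    unfolding qform_def q1 q2 ..
  also have "\<dots> = (\<integral>x. gV x \<bullet> gV' x \<partial>lborel) - lam * (\<integral>x. V x * V' x \<partial>lborel)"
  proof -
    have x2': "(\<integral>x. (u x - V x) * (v x - V' x) \<partial>lborel)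
      = (\<integral>x. u x * v x \<partial>lborel) - (\<integral>x. u x * V' x \<partial>lborel) - (\<integral>x. V x * v x \<partial>lborel) + (\<integral>x. V x * V' x \<partial>lborel)"
      using x2 by simp
    show ?thesis unfolding x1 x2' c1 e1 e2 e3 c2 by (simp add: algebra_simps)
  qed
  also have "\<dots> = rform \<Omega> K lam u v"
    unfolding rform_def V_def[symmetric] V'_def[symmetric] r1 r2 ..
  finally show ?thesis .
qed

end
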